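(* Let $a\in\mathbb N$, let $\mathfrak o$ be a compact discrete valuation ring with maximal ideal $\mathfrak p$ and residue field cardinality $q$, and $t=q^{-s}$. Let $V_{2,a}(\mathfrak o)$ be the $\mathfrak o$-representation of the star quiver $\mathsf S_a$ in which every vertex is represented by $\mathfrak o^2$ and every arrow by the identity map. Then $$\zeta_{V_{2,a}(\mathfrak o)}(s)=\sum_{r_0=0}^\infty t^{2r_0}\left(\left(\zeta_{(r_0,r_0),\mathfrak o}(s)\right)^{a-1}+(1+q^{-1})\sum_{r_1=1}^\infty(qt)^{r_1}\left(\zeta_{(r_0+r_1,r_0),\mathfrak o}(s)\right)^{a-1}\right).$$
   Context: The star quiver $\mathsf S_a$ has vertices $v_1,\dots,v_a$ and arrows $v_1\to v_j$ for $j=2,\dots,a$. Subrepresentations of a representation $(\mathcal L_\iota,f_\phi)$ are tuples of submodules $\Lambda_\iota\le\mathcal L_\iota$ with $f_\phi(\Lambda_{\mathrm{tail}(\phi)})\subseteq\Lambda_{\mathrm{head}(\phi)}$; $\zeta_V(s)=\sum_{V'}\prod_\iota|\mathcal L_\iota:\Lambda_\iota|^{-s}$ over finite-index subrepresentations. For a partition $\lambda=(\lambda_1,\lambda_2)$, $\zeta_{\lambda,\mathfrak o}(s)=\sum_U|M:U|^{-s}$ is the Dirichlet polynomial enumerating all $\mathfrak o$-submodules $U$ of the finite module $M=\mathfrak o/\mathfrak p^{\lambda_1}\times\mathfrak o/\mathfrak p^{\lambda_2}$. *)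

theory Defs
  imports "HOL-Analysis.Analysis"
begin

text \<open>The ring o is modelled as an integral domain type 'a (the whole type is o).
  We fix a uniformizer \<pi> (so the maximal ideal is p = \<pi> o).  o is a DVR iff
  \<pi> is a nonzero non-unit and every nonzero element is a unit times a power of \<pi>.
  o is compact iff the residue field o/p is finite and o is \<pi>-adically complete.\<close>

definition residue_classes :: "'a::idom \<Rightarrow> 'a set set" where
  "residue_classes \<pi> = range (\<lambda>x. {x + \<pi> * y | y. True})"

definition compact_dvr :: "'a::idom \<Rightarrow> nat \<Rightarrow> bool" where
  "compact_dvr \<pi> q \<longleftrightarrow>
     \<pi> \<noteq> 0 \<and> \<not> \<pi> dvd 1 \<and>
     (\<forall>x. x \<noteq> 0 \<longrightarrow> (\<exists>u n. u dvd 1 \<and> x = u * \<pi> ^ n)) \<and>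
     finite (residue_classes \<pi>) \<and> card (residue_classes \<pi>) = q \<and>
     (\<forall>x :: nat \<Rightarrow> 'a. (\<forall>n. \<pi> ^ n dvd (x (Suc n) - x n)) \<longrightarrow>
        (\<exists>y. \<forall>n. \<pi> ^ n dvd (y - x n)))"

definition smult2 :: "'a::comm_ring_1 \<Rightarrow> 'a \<times> 'a \<Rightarrow> 'a \<times> 'a" where
  "smult2 r v = (r * fst v, r * snd v)"

definition is_submodule2 :: "('a::comm_ring_1 \<times> 'a) set \<Rightarrow> bool" where
  "is_submodule2 L \<longleftrightarrow> 0 \<in> L \<and> (\<forall>x\<in>L. \<forall>y\<in>L. x + y \<in> L) \<and>
     (\<forall>r. \<forall>x\<in>L. smult2 r x \<in> L)"

definition coset2 :: "('a::comm_ring_1 \<times> 'a) set \<Rightarrow> 'a \<times> 'a \<Rightarrow> ('a \<times> 'a) set" where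
  "coset2 N x = (\<lambda>n. x + n) ` N"

definition quot2 :: "('a::comm_ring_1 \<times> 'a) set \<Rightarrow> ('a \<times> 'a) set set" where
  "quot2 N = range (coset2 N)"

text \<open>Index |o^2 : L| of a submodule L (meaningful when the quotient is finite).\<close>
definition index2 :: "('a::comm_ring_1 \<times> 'a) set \<Rightarrow> nat" where
  "index2 L = card (quot2 L)"

definition finite_index2 :: "('a::comm_ring_1 \<times> 'a) set \<Rightarrow> bool" where
  "finite_index2 L \<longleftrightarrow> finite (quot2 L)"

text \<open>Vertices 1..a, arrows (tail, head) = (1, j) for j = 2..a.\<close>
definition star_arrows :: "nat \<Rightarrow> (nat \<times> nat) set" where
  "star_arrows a = {(1, j) | j. 2 \<le> j \<and> j \<le> a}"

text \<open>A subrepresentation is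
  a tuple (Lambda_1, ..., Lambda_a) of submodules of o^2 with
  f_phi(Lambda_tail) contained in Lambda_head; tuples are functions on nat that are
  UNIV outside 1..a.\<close>
definition V2a_map :: "nat \<times> nat \<Rightarrow> 'a::comm_ring_1 \<times> 'a \<Rightarrow> 'a \<times> 'a" where
  "V2a_map phi = id"

definition finite_index_subreps_V2a :: "nat \<Rightarrow> (nat \<Rightarrow> ('a::comm_ring_1 \<times> 'a) set) set" where
  "finite_index_subreps_V2a a =
     {Lam. (\<forall>i. i \<notin> {1..a} \<longrightarrow> Lam i = UNIV) \<and>
           (\<forall>i\<in>{1..a}. is_submodule2 (Lam i) \<and> finite_index2 (Lam i)) \<and>
           (\<forall>(i, j)\<in>star_arrows a. V2a_map (i, j) ` Lam i \<subseteq> Lam j)}"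

definition zeta_V2a :: "'a::comm_ring_1 itself \<Rightarrow> nat \<Rightarrow> real \<Rightarrow> ennreal" where
  "zeta_V2a _ a s =
     infsum (\<lambda>Lam. ennreal (\<Prod>i\<in>{1..a}. real (index2 (Lam i)) powr (- s)))
            (finite_index_subreps_V2a a :: (nat \<Rightarrow> ('a \<times> 'a) set) set)"

text \<open>The kernel N = p^l1 x p^l2 of o^2 -> M; M is modelled as quot2 N.\<close>
definition lat2 :: "'a::comm_ring_1 \<Rightarrow> nat \<Rightarrow> nat \<Rightarrow> ('a \<times> 'a) set" where
  "lat2 \<pi> l1 l2 = {(\<pi> ^ l1 * x, \<pi> ^ l2 * y) | x y. True}"

definition quot_submodules :: "('a::comm_ring_1 \<times> 'a) set \<Rightarrow> ('a \<times> 'a) set set set" where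
  "quot_submodules N =
     {U. U \<subseteq> quot2 N \<and> coset2 N 0 \<in> U \<and>
         (\<forall>x y. coset2 N x \<in> U \<longrightarrow> coset2 N y \<in> U \<longrightarrow> coset2 N (x + y) \<in> U) \<and>
         (\<forall>r x. coset2 N x \<in> U \<longrightarrow> coset2 N (smult2 r x) \<in> U)}"

text \<open>|M : U| = |M| / |U| (M finite).\<close>
definition zeta_lambda :: "'a::comm_ring_1 \<Rightarrow> nat \<Rightarrow> nat \<Rightarrow> real \<Rightarrow> real" where
  "zeta_lambda \<pi> l1 l2 s =
     (\<Sum>U\<in>quot_submodules (lat2 \<pi> l1 l2).
        (real (card (quot2 (lat2 \<pi> l1 l2))) / real (card U)) powr (- s))"

end

theory Submission
  imports Defs
begin


locale cdvr =
  fixes pi :: "'a::idom" and q :: nat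
  assumes cd: "compact_dvr pi q"
begin

lemma pi_nz: "pi \<noteq> 0" using cd unfolding compact_dvr_def by blast
lemma pi_nunit: "\<not> pi dvd 1" using cd unfolding compact_dvr_def by blast
lemma factor: "x \<noteq> 0 \<Longrightarrow> \<exists>u n. u dvd 1 \<and> x = u * pi ^ n"
  using cd unfolding compact_dvr_def by blast

lemma nondvd_unit: assumes "\<not> pi dvd x" shows "x dvd 1"
proof -
  have "x \<noteq> 0" using assms by auto
  then obtain u n where u: "u dvd 1" "x = u * pi ^ n" using factor by blast
  have "n = 0"
  proof (rule ccontr)
    assume "n \<noteq> 0"
    then have "pi dvd pi ^ n" by (simp add: dvd_power)
    then have "pi dvd x" using u by simp
    then show False using assms by simp
  qed
  then show ?thesis using u by simp
qed

lemma unit_nondvd: "u dvd 1 \<Longrightarrow> \<not> pi dvd u"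
  using pi_nunit dvd_trans by blast

lemma pow_dvd_pow_iff: "pi ^ m dvd pi ^ n \<longleftrightarrow> m \<le> n"
proof
  assume h: "pi ^ m dvd pi ^ n"
  show "m \<le> n"
  proof (rule ccontr)
    assume "\<not> m \<le> n"
    then have "pi ^ m = pi ^ n * pi ^ (m - n)" by (simp add: power_add[symmetric])
    with h have "pi ^ n * pi ^ (m - n) dvd pi ^ n * 1" by simp
    then have "pi ^ (m - n) dvd 1" using pi_nz by (simp only: dvd_mult_cancel_left) simp
    moreover have "pi dvd pi ^ (m - n)" using \<open>\<not> m \<le> n\<close> by (simp add: dvd_power)
    ultimately show False using pi_nunit dvd_trans by blast
  qed
next
  assume "m \<le> n" then show "pi ^ m dvd pi ^ n" by (simp add: le_imp_power_dvd)
qed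

lemma one_minus_unit: "k \<ge> 1 \<Longrightarrow> (1 - pi ^ k * y) dvd 1"
proof (rule nondvd_unit)
  assume k: "k \<ge> 1"
  show "\<not> pi dvd 1 - pi ^ k * y"
  proof
    assume "pi dvd 1 - pi ^ k * y"
    moreover have "pi dvd pi ^ k * y" using k by (simp add: dvd_power)
    ultimately have "pi dvd (1 - pi ^ k * y) + pi ^ k * y" by (rule dvd_add)
    then show False using pi_nunit by simp
  qed
qed

lemma dvd_1_minus: "pi dvd x \<Longrightarrow> (1 - x) dvd 1"
  using one_minus_unit[of 1] by (auto simp: dvd_def)

lemma dvd_unit_cancel: "a dvd b * v \<Longrightarrow> v dvd 1 \<Longrightarrow> a dvd (b::'a)"
proof -
  assume "a dvd b * v" "v dvd 1"
  then obtain v' where "1 = v * v'" by (auto simp: dvd_def)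
  have "a dvd b * v * v'" using \<open>a dvd b * v\<close> by (rule dvd_mult2)
  then show "a dvd b" using \<open>1 = v * v'\<close> by (simp add: mult.assoc)
qed

lemma pow_mult_unit_eq: assumes "pi ^ m * u = pi ^ n * v" "u dvd 1" "v dvd 1" shows "m = n"
proof -
  have "pi ^ m dvd pi ^ n"
  proof -
    have "pi ^ m dvd pi ^ n * v" using assms(1) by (metis dvd_triv_left)
    then show ?thesis using assms(3) dvd_unit_cancel by blast
  qed
  moreover have "pi ^ n dvd pi ^ m"
  proof -
    have "pi ^ n dvd pi ^ m * u" using assms(1) by (metis dvd_triv_left)
    then show ?thesis using assms(2) dvd_unit_cancel by blast
  qed
  ultimately show ?thesis by (simp add: pow_dvd_pow_iff)
qed

subsection \<open>Residues\<close>

definition cls :: "'a \<Rightarrow> 'a set" where "cls x = {x + pi * y | y. True}"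

lemma rc_eq: "residue_classes pi = range cls"
  unfolding residue_classes_def cls_def by simp

lemma rc_fin: "finite (range cls)"
  using cd unfolding compact_dvr_def rc_eq[symmetric] by blast
lemma rc_card: "card (range cls) = q"
  using cd unfolding compact_dvr_def rc_eq[symmetric] by blast

lemma mem_cls: "z \<in> cls x \<longleftrightarrow> pi dvd (z - x)"
proof
  assume "z \<in> cls x" then obtain y where "z = x + pi * y" unfolding cls_def by blast
  then show "pi dvd (z - x)" by simp
next
  assume "pi dvd (z - x)" then obtain y where "z - x = pi * y" by (auto simp: dvd_def)
  then have "z = x + pi * y" by (simp add: algebra_simps)
  then show "z \<in> cls x" unfolding cls_def by blast
qed

lemma cls_eq: assumes "pi dvd (x - y)" shows "cls x = cls y"
proof -
  have "pi dvd z - x \<longleftrightarrow> pi dvd z - y" for z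
  proof -
    have "z - y = (z - x) + (x - y)" by simp
    then show ?thesis using assms dvd_add_left_iff by metis
  qed
  then show ?thesis unfolding set_eq_iff mem_cls by blast
qed

lemma dvd_tri: "pi dvd a - x \<Longrightarrow> pi dvd a - y \<Longrightarrow> pi dvd x - y"
proof -
  assume "pi dvd a - x" "pi dvd a - y"
  then have "pi dvd (a - y) - (a - x)" by (rule dvd_diff[rotated])
  then show ?thesis by simp
qed

lemma dvd_sub_sym: "c dvd a - b \<Longrightarrow> c dvd b - (a::'a)"
  by (metis dvd_minus_iff minus_diff_eq)

definition R1 :: "'a set" where "R1 = (\<lambda>C. SOME x. x \<in> C) ` range cls"

lemma R1_ex: "\<exists>r\<in>R1. pi dvd (x - r)"
proof -
  have "x \<in> cls x" by (simp add: mem_cls)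
  then have "(SOME z. z \<in> cls x) \<in> cls x" by (rule someI)
  then have "pi dvd (SOME z. z \<in> cls x) - x" unfolding mem_cls .
  then have "pi dvd x - (SOME z. z \<in> cls x)" by (rule dvd_sub_sym)
  moreover have "(SOME z. z \<in> cls x) \<in> R1" unfolding R1_def by (rule image_eqI[where x="cls x"]) auto
  ultimately show ?thesis by blast
qed

lemma R1_uniq: "r \<in> R1 \<Longrightarrow> r' \<in> R1 \<Longrightarrow> pi dvd (r - r') \<Longrightarrow> r = r'"
proof -
  assume "r \<in> R1" "r' \<in> R1" "pi dvd (r - r')"
  then obtain x x' where r: "r = (SOME z. z \<in> cls x)" and r': "r' = (SOME z. z \<in> cls x')"
    unfolding R1_def by auto
  have "x \<in> cls x" "x' \<in> cls x'" by (simp_all add: mem_cls)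
  then have a: "r \<in> cls x" "r' \<in> cls x'" unfolding r r' by (metis someI)+
  have "pi dvd (x - x')"
  proof -
    have "pi dvd (r - r') - (r - x) + (r' - x')" using a \<open>pi dvd (r - r')\<close>
      unfolding mem_cls by (metis dvd_add dvd_diff)
    moreover have "(r - r') - (r - x) + (r' - x') = x - x'" by (simp add: algebra_simps)
    ultimately show ?thesis by simp
  qed
  then have "cls x = cls x'" by (rule cls_eq)
  then show "r = r'" using r r' by simp
qed

lemma R1_card: "finite R1 \<and> card R1 = q"
proof -
  have "inj_on (\<lambda>C. SOME x. x \<in> C) (range cls)"
  proof (rule inj_onI)
    fix C D assume "C \<in> range cls" "D \<in> range cls" and e: "(SOME x. x \<in> C) = (SOME x. x \<in> D)"
    then obtain x y where C: "C = cls x" and D: "D = cls y" by auto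
    have "x \<in> cls x" "y \<in> cls y" by (simp_all add: mem_cls)
    then have "(SOME z. z \<in> cls x) \<in> cls x" "(SOME z. z \<in> cls y) \<in> cls y" by (metis someI)+
    then have "pi dvd (SOME z. z \<in> cls x) - x" "pi dvd (SOME z. z \<in> cls x) - y" using e C D
      by (auto simp: mem_cls)
    then have "pi dvd x - y" by (rule dvd_tri)
    then show "C = D" unfolding C D by (rule cls_eq)
  qed
  then show ?thesis unfolding R1_def using rc_fin rc_card by (simp add: card_image)
qed

fun reps :: "nat \<Rightarrow> 'a set" where
  "reps 0 = {0}"
| "reps (Suc n) = (\<lambda>(r, s). r + pi * s) ` (R1 \<times> reps n)"

lemma reps_ex: "\<exists>r\<in>reps n. pi ^ n dvd (x - r)"
proof (induction n arbitrary: x)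
  case 0 then show ?case by simp
next
  case (Suc n)
  obtain r where r: "r \<in> R1" "pi dvd x - r" using R1_ex by blast
  then obtain y where y: "x - r = pi * y" by (auto simp: dvd_def)
  obtain s where s: "s \<in> reps n" "pi ^ n dvd y - s" using Suc by blast
  have "pi ^ Suc n dvd x - (r + pi * s)"
  proof -
    have "x - (r + pi * s) = pi * (y - s)" using y by (simp add: algebra_simps)
    then show ?thesis using s by simp
  qed
  then show ?case using r s by force
qed

lemma reps_uniq: "r \<in> reps n \<Longrightarrow> r' \<in> reps n \<Longrightarrow> pi ^ n dvd (r - r') \<Longrightarrow> r = r'"
proof (induction n arbitrary: r r')
  case 0 then show ?case by simp
next
  case (Suc n)
  then obtain a b a' b' where ab: "a \<in> R1" "b \<in> reps n" "r = a + pi * b"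
    and ab': "a' \<in> R1" "b' \<in> reps n" "r' = a' + pi * b'" by auto
  have "pi dvd r - r'" using Suc.prems(3) by (metis dvd_power dvd_trans zero_less_Suc)
  then have "pi dvd (a - a') + pi * (b - b')" using ab ab' by (simp add: algebra_simps)
  then have "pi dvd a - a'" by (simp add: dvd_add_left_iff)
  then have "a = a'" using ab ab' R1_uniq by blast
  then have "pi * pi ^ n dvd pi * (b - b')" using Suc.prems(3) ab ab' by (simp add: algebra_simps)
  then have "pi ^ n dvd b - b'" using pi_nz by simp
  then have "b = b'" using Suc.IH ab ab' by blast
  then show ?case using ab ab' \<open>a = a'\<close> by simp
qed

lemma reps_card: "finite (reps n) \<and> card (reps n) = q ^ n"
proof (induction n)
  case 0 then show ?case by simp
next
  case (Suc n)
  have inj: "inj_on (\<lambda>(r, s). r + pi * s) (R1 \<times> reps n)"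
  proof (rule inj_onI, clarify)
    fix a b a' b' assume h: "a \<in> R1" "b \<in> reps n" "a' \<in> R1" "b' \<in> reps n" "a + pi * b = a' + pi * b'"
    then have "a + pi * b \<in> reps (Suc n)" "a' + pi * b' \<in> reps (Suc n)" by auto
    have "pi dvd (a - a') + pi * (b - b')" using h by (simp add: algebra_simps)
    then have "pi dvd a - a'" by (simp add: dvd_add_left_iff)
    then have "a = a'" using h R1_uniq by blast
    then have "pi * (b - b') = 0" using h by (simp add: algebra_simps)
    then show "a = a' \<and> b = b'" using pi_nz \<open>a = a'\<close> by simp
  qed
  then show ?case using Suc R1_card by (simp add: card_image card_cartesian_product)
qed

lemma q_ge2: "q \<ge> 2"
proof -
  have "cls 0 \<noteq> cls 1"
  proof
    assume "cls 0 = cls 1"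
    moreover have "0 \<in> cls 0" by (simp add: mem_cls)
    ultimately have "0 \<in> cls 1" by simp
    then have "pi dvd - 1" by (simp add: mem_cls)
    then show False using pi_nunit by simp
  qed
  then have "card {cls 0, cls 1} = 2" by simp
  moreover have "card {cls 0, cls 1} \<le> card (range cls)" using rc_fin by (intro card_mono) auto
  ultimately show ?thesis using rc_card by simp
qed

end


lemma smult2_simp[simp]: "smult2 r (a, b) = (r * a, r * b)" by (simp add: smult2_def)

lemma sub_zero: "is_submodule2 L \<Longrightarrow> 0 \<in> L" by (simp add: is_submodule2_def)
lemma sub_add: "is_submodule2 L \<Longrightarrow> x \<in> L \<Longrightarrow> y \<in> L \<Longrightarrow> x + y \<in> L" by (simp add: is_submodule2_def)
lemma sub_smult: "is_submodule2 L \<Longrightarrow> x \<in> L \<Longrightarrow> smult2 r x \<in> L" by (simp add: is_submodule2_def)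
lemma sub_neg: "is_submodule2 L \<Longrightarrow> x \<in> L \<Longrightarrow> - x \<in> (L :: ('a::comm_ring_1 \<times> 'a) set)"
proof -
  assume "is_submodule2 L" "x \<in> L"
  then have "smult2 (-1) x \<in> L" by (rule sub_smult)
  moreover have "smult2 (-1) x = - x" by (cases x) simp
  ultimately show ?thesis by simp
qed
lemma sub_diff: "is_submodule2 L \<Longrightarrow> x \<in> L \<Longrightarrow> y \<in> L \<Longrightarrow> x - y \<in> (L :: ('a::comm_ring_1 \<times> 'a) set)"
  using sub_add[of L x "- y"] sub_neg[of L y] by simp

lemma mem_coset: "z \<in> coset2 L x \<longleftrightarrow> z - x \<in> (L :: ('a::comm_ring_1 \<times> 'a) set)"
  unfolding coset2_def by (auto simp: algebra_simps image_iff) (metis add.commute diff_add_cancel)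

lemma coset_self: "is_submodule2 L \<Longrightarrow> x \<in> coset2 L x"
  by (simp add: mem_coset sub_zero)

lemma coset_eq: assumes "is_submodule2 L"
  shows "coset2 L x = coset2 L y \<longleftrightarrow> x - y \<in> (L :: ('a::comm_ring_1 \<times> 'a) set)"
proof
  assume "coset2 L x = coset2 L y"
  then have "x \<in> coset2 L y" using coset_self[OF assms, of x] by simp
  then show "x - y \<in> L" by (simp add: mem_coset)
next
  assume h: "x - y \<in> L"
  have "z - x \<in> L \<longleftrightarrow> z - y \<in> L" for z
  proof
    assume "z - x \<in> L" then have "(z - x) + (x - y) \<in> L" using h assms sub_add by blast
    then show "z - y \<in> L" by simp
  next
    assume "z - y \<in> L" then have "(z - y) - (x - y) \<in> L" using h assms sub_diff by blast
    then show "z - x \<in> L" by simp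
  qed
  then show "coset2 L x = coset2 L y" by (auto simp: mem_coset)
qed

lemma coset_plus: "(\<lambda>c. x + c) ` coset2 L y = coset2 L (x + y)"
  unfolding coset2_def by (auto simp: image_iff add.assoc)

lemma mem_lat2: "(x, y) \<in> lat2 p l1 l2 \<longleftrightarrow> p ^ l1 dvd x \<and> p ^ l2 dvd (y :: 'a :: comm_ring_1)"
  unfolding lat2_def by (auto simp: dvd_def)

lemma mem_lat2': "v \<in> lat2 p l1 l2 \<longleftrightarrow> p ^ l1 dvd fst v \<and> p ^ l2 dvd (snd v :: 'a :: comm_ring_1)"
  using mem_lat2[of "fst v" "snd v"] by simp

lemma lat2_sub: "is_submodule2 (lat2 (p::'a::comm_ring_1) l1 l2)"
  unfolding is_submodule2_def
proof (intro conjI ballI allI)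
  fix x y assume "x \<in> lat2 p l1 l2" "y \<in> lat2 p l1 l2"
  then show "x + y \<in> lat2 p l1 l2" unfolding mem_lat2' by (simp add: dvd_add)
next
  fix r x assume "x \<in> lat2 p l1 l2"
  then show "smult2 r x \<in> lat2 p l1 l2" unfolding mem_lat2' by (simp add: smult2_def)
qed (simp add: mem_lat2')

section \<open>Quotients by sublattices\<close>

definition above :: "('a::comm_ring_1 \<times> 'a) set \<Rightarrow> ('a \<times> 'a) set set" where
  "above N = {L. is_submodule2 L \<and> N \<subseteq> L}"

lemma quot_above_finite:
  assumes N: "is_submodule2 N" and L: "is_submodule2 L" and NL: "N \<subseteq> L" and fin: "finite (quot2 N)"
  shows "finite (quot2 (L :: ('a::comm_ring_1 \<times> 'a) set))"
proof -
  define g where "g C = {z. \<exists>c\<in>C. z - c \<in> L}" for C :: "('a \<times> 'a) set"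
  have "g (coset2 N x) = coset2 L x" for x
  proof -
    have "(\<exists>c\<in>coset2 N x. z - c \<in> L) \<longleftrightarrow> z - x \<in> L" for z
    proof
      assume "\<exists>c\<in>coset2 N x. z - c \<in> L"
      then obtain c where c: "c - x \<in> N" "z - c \<in> L" by (auto simp: mem_coset)
      then have "(z - c) + (c - x) \<in> L" using NL L sub_add by blast
      then show "z - x \<in> L" by simp
    next
      assume "z - x \<in> L" then show "\<exists>c\<in>coset2 N x. z - c \<in> L"
        using coset_self[OF N, of x] by blast
    qed
    then show ?thesis unfolding g_def by (auto simp: mem_coset)
  qed
  then have "quot2 L = g ` quot2 N" unfolding quot2_def by (auto simp: image_iff)
  then show ?thesis using fin by simp
qed

lemma quot_card_mult:
  assumes N: "is_submodule2 N" and L: "is_submodule2 L" and NL: "N \<subseteq> L" and fin: "finite (quot2 N)"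
  shows "card (quot2 N) = card (quot2 L) * card (coset2 N ` (L :: ('a::comm_ring_1 \<times> 'a) set))"
proof -
  define P where "P D = {C \<in> quot2 N. C \<subseteq> D}" for D
  have finL: "finite (quot2 L)" using quot_above_finite[OF assms] .
  have cov: "quot2 N = \<Union> (P ` quot2 L)"
  proof
    show "quot2 N \<subseteq> \<Union> (P ` quot2 L)"
    proof
      fix C assume "C \<in> quot2 N"
      then obtain x where C: "C = coset2 N x" unfolding quot2_def by auto
      have "C \<subseteq> coset2 L x" unfolding C using NL by (auto simp: mem_coset)
      then have "C \<in> P (coset2 L x)" unfolding P_def using \<open>C \<in> quot2 N\<close> by auto
      moreover have "coset2 L x \<in> quot2 L" unfolding quot2_def by simp
      ultimately show "C \<in> \<Union> (P ` quot2 L)" by blast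
    qed
  qed (auto simp: P_def)
  have disj: "P D \<inter> P D' = {}" if dD: "D \<in> quot2 L" and dD': "D' \<in> quot2 L" and ne: "D \<noteq> D'" for D D'
  proof (rule ccontr)
    assume "P D \<inter> P D' \<noteq> {}"
    then obtain C where "C \<in> quot2 N" "C \<subseteq> D" "C \<subseteq> D'" unfolding P_def by auto
    then obtain w where "C = coset2 N w" unfolding quot2_def by auto
    then have "w \<in> C" using coset_self[OF N] by simp
    then obtain z where "z \<in> C" by blast
    then have "z \<in> D" "z \<in> D'" using \<open>C \<subseteq> D\<close> \<open>C \<subseteq> D'\<close> by auto
    obtain x where D: "D = coset2 L x" using dD unfolding quot2_def by auto
    obtain y where D': "D' = coset2 L y" using dD' unfolding quot2_def by auto
    have "z - x \<in> L" "z - y \<in> L" using \<open>z \<in> D\<close> \<open>z \<in> D'\<close> D D' by (auto simp: mem_coset)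
    then have "(z - y) - (z - x) \<in> L" using L sub_diff by blast
    then have "x - y \<in> L" by simp
    then have "D = D'" using D D' coset_eq[OF L] by simp
    then show False using ne by simp
  qed
  have cardP: "card (P D) = card (coset2 N ` L)" if dD: "D \<in> quot2 L" for D
  proof -
    obtain x where D: "D = coset2 L x" using dD unfolding quot2_def by auto
    have "P D = (\<lambda>C. (\<lambda>c. x + c) ` C) ` (coset2 N ` L)"
    proof
      show "P D \<subseteq> (\<lambda>C. (\<lambda>c. x + c) ` C) ` (coset2 N ` L)"
      proof
        fix C assume "C \<in> P D"
        then obtain y where C: "C = coset2 N y" and sub: "C \<subseteq> D" unfolding P_def quot2_def by auto
        have "y \<in> D" using sub coset_self[OF N, of y] C by auto
        then have "y - x \<in> L" using D by (simp add: mem_coset)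
        moreover have "C = (\<lambda>c. x + c) ` coset2 N (y - x)" using C coset_plus[of x N "y - x"] by simp
        ultimately show "C \<in> (\<lambda>C. (\<lambda>c. x + c) ` C) ` (coset2 N ` L)" by blast
      qed
    next
      show "(\<lambda>C. (\<lambda>c. x + c) ` C) ` (coset2 N ` L) \<subseteq> P D"
      proof
        fix C assume "C \<in> (\<lambda>C. (\<lambda>c. x + c) ` C) ` (coset2 N ` L)"
        then obtain l where l: "l \<in> L" "C = (\<lambda>c. x + c) ` coset2 N l" by auto
        then have C: "C = coset2 N (x + l)" using coset_plus by simp
        have "C \<subseteq> D"
        proof
          fix z assume "z \<in> C"
          then have "z - (x + l) \<in> L" using C NL by (auto simp: mem_coset)
          then have "(z - (x + l)) + l \<in> L" using l L sub_add by blast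
          then show "z \<in> D" using D by (simp add: mem_coset algebra_simps)
        qed
        then show "C \<in> P D" unfolding P_def quot2_def C by auto
      qed
    qed
    moreover have "inj_on (\<lambda>C. (\<lambda>c. x + c) ` C) (coset2 N ` L)"
      by (rule inj_onI) (metis add_left_cancel inj_image_eq_iff inj_on_def)
    ultimately show ?thesis by (simp add: card_image)
  qed
  have "card (quot2 N) = (\<Sum>D\<in>quot2 L. card (P D))"
    unfolding cov
  proof (rule card_UN_disjoint[OF finL])
    show "\<forall>D\<in>quot2 L. finite (P D)" using fin by (auto simp: P_def)
  qed (use disj in blast)
  also have "\<dots> = card (quot2 L) * card (coset2 N ` L)" using cardP by simp
  finally show ?thesis .
qed

lemma above_bij:
  assumes N: "is_submodule2 (N :: ('a::comm_ring_1 \<times> 'a) set)"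
  shows "bij_betw (\<lambda>L. coset2 N ` L) (above N) (quot_submodules N)"
proof (rule bij_betwI')
  fix L L' assume "L \<in> above N" "L' \<in> above N"
  have U: "\<Union> (coset2 N ` L) = L" if "L \<in> above N" for L
  proof
    show "\<Union> (coset2 N ` L) \<subseteq> L"
    proof
      fix z assume "z \<in> \<Union> (coset2 N ` L)"
      then obtain l where "l \<in> L" "z - l \<in> N" by (auto simp: mem_coset)
      then have "z - l \<in> L" using that by (auto simp: above_def)
      moreover have "is_submodule2 L" using that by (simp add: above_def)
      ultimately have "(z - l) + l \<in> L" using sub_add[of L "z - l" l] \<open>l \<in> L\<close> by blast
      then show "z \<in> L" by simp
    qed
  next
    show "L \<subseteq> \<Union> (coset2 N ` L)" using coset_self[OF N] by auto
  qed
  show "(coset2 N ` L = coset2 N ` L') = (L = L')"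
    using U[OF \<open>L \<in> above N\<close>] U[OF \<open>L' \<in> above N\<close>] by metis
next
  fix L assume L: "L \<in> above N"
  then have Ls: "is_submodule2 L" and NL: "N \<subseteq> L" by (auto simp: above_def)
  have memL: "coset2 N x \<in> coset2 N ` L \<longleftrightarrow> x \<in> L" for x
  proof
    assume "coset2 N x \<in> coset2 N ` L"
    then obtain l where "l \<in> L" "coset2 N x = coset2 N l" by auto
    then have "x - l \<in> L" using coset_eq[OF N] NL by auto
    then have "(x - l) + l \<in> L" using \<open>l \<in> L\<close> Ls sub_add by blast
    then show "x \<in> L" by simp
  qed auto
  show "coset2 N ` L \<in> quot_submodules N" unfolding quot_submodules_def
  proof (intro CollectI conjI allI impI)
    show "coset2 N ` L \<subseteq> quot2 N" unfolding quot2_def by auto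
    show "coset2 N 0 \<in> coset2 N ` L" using sub_zero[OF Ls] by blast
  next
    fix x y assume "coset2 N x \<in> coset2 N ` L" "coset2 N y \<in> coset2 N ` L"
    then have "x \<in> L" "y \<in> L" using memL by blast+
    then show "coset2 N (x + y) \<in> coset2 N ` L" using sub_add[OF Ls] by blast
  next
    fix r x assume "coset2 N x \<in> coset2 N ` L"
    then have "x \<in> L" using memL by blast
    then show "coset2 N (smult2 r x) \<in> coset2 N ` L" using sub_smult[OF Ls] by blast
  qed
next
  fix U assume U: "U \<in> quot_submodules N"
  define L where "L = {x. coset2 N x \<in> U}"
  have Ls: "is_submodule2 L" using U unfolding L_def quot_submodules_def is_submodule2_def by auto
  have NL: "N \<subseteq> L"
  proof
    fix n assume "n \<in> N"
    then have "coset2 N n = coset2 N 0" using coset_eq[OF N] by simp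
    then show "n \<in> L" using U unfolding L_def quot_submodules_def by simp
  qed
  have "coset2 N ` L = U"
  proof
    show "U \<subseteq> coset2 N ` L"
    proof
      fix C assume "C \<in> U"
      then obtain x where "C = coset2 N x" using U unfolding quot_submodules_def quot2_def by auto
      then show "C \<in> coset2 N ` L" using \<open>C \<in> U\<close> unfolding L_def by auto
    qed
  qed (auto simp: L_def)
  then show "\<exists>L\<in>above N. U = coset2 N ` L" using Ls NL unfolding above_def by auto
qed

definition Zs :: "('a::comm_ring_1 \<times> 'a) set \<Rightarrow> real \<Rightarrow> real" where
  "Zs N s = (\<Sum>L\<in>above N. real (index2 L) powr (- s))"

lemma quot_sum_eq_Zs:
  assumes N: "is_submodule2 N" and fin: "finite (quot2 (N :: ('a::comm_ring_1 \<times> 'a) set))"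
  shows "(\<Sum>U\<in>quot_submodules N. (real (card (quot2 N)) / real (card U)) powr (- s)) = Zs N s"
proof -
  have "(\<Sum>U\<in>quot_submodules N. (real (card (quot2 N)) / real (card U)) powr (- s))
      = (\<Sum>L\<in>above N. (real (card (quot2 N)) / real (card (coset2 N ` L))) powr (- s))"
    by (rule sum.reindex_bij_betw[OF above_bij[OF N], symmetric])
  also have "\<dots> = Zs N s" unfolding Zs_def
  proof (rule sum.cong[OF refl])
    fix L assume L: "L \<in> above N"
    then have Ls: "is_submodule2 L" and NL: "N \<subseteq> L" by (auto simp: above_def)
    have "card (coset2 N ` L) \<noteq> 0"
    proof -
      have "coset2 N ` L \<subseteq> quot2 N" unfolding quot2_def by auto
      then have "finite (coset2 N ` L)" using fin finite_subset by blast
      moreover have "coset2 N 0 \<in> coset2 N ` L" using sub_zero[OF Ls] by auto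
      ultimately show ?thesis by auto
    qed
    then show "(real (card (quot2 N)) / real (card (coset2 N ` L))) powr (- s) = real (index2 L) powr (- s)"
      unfolding index2_def quot_card_mult[OF N Ls NL fin] by simp
  qed
  finally show ?thesis .
qed

lemma zeta_lambda_Zs: "zeta_lambda p l1 l2 s = Zs (lat2 p l1 l2) s"
  if "finite (quot2 (lat2 (p :: 'a :: comm_ring_1) l1 l2))"
  unfolding zeta_lambda_def using quot_sum_eq_Zs[OF lat2_sub that] .



definition isoL :: "('a::comm_ring_1 \<times> 'a \<Rightarrow> 'a \<times> 'a) \<Rightarrow> bool" where
  "isoL g \<longleftrightarrow> bij g \<and> (\<forall>x y. g (x + y) = g x + g y) \<and> (\<forall>r x. g (smult2 r x) = smult2 r (g x))"

lemma isoL_add: "isoL g \<Longrightarrow> g (x + y) = g x + g y" unfolding isoL_def by blast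
lemma isoL_smult: "isoL g \<Longrightarrow> g (smult2 r x) = smult2 r (g x)" unfolding isoL_def by blast
lemma isoL_bij: "isoL g \<Longrightarrow> bij g" by (simp add: isoL_def)
lemma isoL_inj: "isoL g \<Longrightarrow> inj g" by (simp add: isoL_def bij_def)
lemma isoL_surj: "isoL g \<Longrightarrow> surj g" by (simp add: isoL_def bij_def)
lemma isoL_zero: "isoL g \<Longrightarrow> g 0 = 0"
  using isoL_add[of g 0 0] by simp
lemma isoL_diff: "isoL g \<Longrightarrow> g (x - y) = g x - g y"
  using isoL_add[of g "x - y" y] by (simp add: algebra_simps)

lemma isoL_inv: assumes "isoL g" shows "isoL (inv g)"
proof -
  have b: "bij g" using assms isoL_bij by blast
  have gi: "g (inv g z) = z" for z using b by (simp add: bij_is_surj surj_f_inv_f)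
  have ig: "inv g (g z) = z" for z using b by (simp add: bij_is_inj)
  show ?thesis unfolding isoL_def
  proof (intro conjI allI)
    show "bij (inv g)" using b by (rule bij_imp_bij_inv)
    fix x y
    have "g (inv g x + inv g y) = x + y" using isoL_add[OF assms] gi by simp
    then show "inv g (x + y) = inv g x + inv g y" using ig by metis
  next
    fix r x
    have "g (smult2 r (inv g x)) = smult2 r x" using isoL_smult[OF assms] gi by simp
    then show "inv g (smult2 r x) = smult2 r (inv g x)" using ig by metis
  qed
qed

lemma iso_sub: assumes g: "isoL g" and L: "is_submodule2 L" shows "is_submodule2 (g ` L)"
  unfolding is_submodule2_def
proof (intro conjI ballI allI)
  show "0 \<in> g ` L" using isoL_zero[OF g] sub_zero[OF L] by (metis image_eqI)
next
  fix x y assume "x \<in> g ` L" "y \<in> g ` L"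
  then obtain a b where "a \<in> L" "b \<in> L" "x = g a" "y = g b" by auto
  then show "x + y \<in> g ` L" using isoL_add[OF g, of a b] sub_add[OF L] by (metis image_eqI)
next
  fix r x assume "x \<in> g ` L"
  then obtain a where "a \<in> L" "x = g a" by auto
  then show "smult2 r x \<in> g ` L" using isoL_smult[OF g, of r a] sub_smult[OF L] by (metis image_eqI)
qed

lemma iso_coset: assumes g: "isoL g" shows "g ` coset2 L x = coset2 (g ` L) (g x)"
  unfolding coset2_def image_image using isoL_add[OF g] by simp

lemma iso_quot: assumes g: "isoL g" shows "quot2 (g ` L) = (\<lambda>C. g ` C) ` quot2 L"
proof -
  have "range (coset2 (g ` L)) = range (\<lambda>x. coset2 (g ` L) (g x))"
    using isoL_surj[OF g] by (metis image_image)
  then show ?thesis unfolding quot2_def using iso_coset[OF g] by (simp add: image_image)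
qed

lemma iso_index: assumes g: "isoL g"
  shows "index2 (g ` L) = index2 L" and "finite (quot2 (g ` L)) \<longleftrightarrow> finite (quot2 L)"
proof -
  have inj: "inj (\<lambda>C. g ` C)" using isoL_inj[OF g] by (simp add: inj_on_def inj_image_eq_iff)
  show "index2 (g ` L) = index2 L" unfolding index2_def iso_quot[OF g]
    using inj by (simp add: card_image inj_on_subset)
  show "finite (quot2 (g ` L)) \<longleftrightarrow> finite (quot2 L)" unfolding iso_quot[OF g]
    using inj by (simp add: finite_image_iff inj_on_subset)
qed

lemma iso_above: assumes g: "isoL g" shows "above (g ` N) = (\<lambda>L. g ` L) ` above N"
proof
  show "(\<lambda>L. g ` L) ` above N \<subseteq> above (g ` N)"
    using iso_sub[OF g] by (auto simp: above_def)
next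
  show "above (g ` N) \<subseteq> (\<lambda>L. g ` L) ` above N"
  proof
    fix L' assume L': "L' \<in> above (g ` N)"
    have gi: "g ` (inv g ` A) = A" for A using isoL_surj[OF g] by (simp add: image_image surj_f_inv_f)
    have ig: "inv g ` (g ` A) = A" for A using isoL_inj[OF g] by (simp add: image_image)
    have "g ` N \<subseteq> L'" "is_submodule2 L'" using L' by (auto simp: above_def)
    have "inv g ` (g ` N) \<subseteq> inv g ` L'" using \<open>g ` N \<subseteq> L'\<close> by (rule image_mono)
    then have "N \<subseteq> inv g ` L'" using ig[of N] by simp
    then have "inv g ` L' \<in> above N"
      using \<open>is_submodule2 L'\<close> iso_sub[OF isoL_inv[OF g]] by (auto simp: above_def)
    then show "L' \<in> (\<lambda>L. g ` L) ` above N" using gi[of L'] by (metis image_eqI)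
  qed
qed

lemma iso_Zs: assumes g: "isoL g" shows "Zs (g ` N) s = Zs N s"
proof -
  have inj: "inj (\<lambda>C. g ` C)" using isoL_inj[OF g] by (simp add: inj_on_def inj_image_eq_iff)
  show ?thesis unfolding Zs_def iso_above[OF g]
    by (subst sum.reindex) (auto intro: inj_on_subset[OF inj] simp: iso_index[OF g])
qed

definition gA :: "'a::comm_ring_1 \<Rightarrow> 'a \<times> 'a \<Rightarrow> 'a \<times> 'a" where
  "gA d v = (snd v, fst v + snd v * d)"
definition gB :: "'a::comm_ring_1 \<Rightarrow> 'a \<times> 'a \<Rightarrow> 'a \<times> 'a" where
  "gB c v = (fst v + snd v * c, snd v)"
definition sw :: "'a::comm_ring_1 \<times> 'a \<Rightarrow> 'a \<times> 'a" where
  "sw v = (snd v, fst v)"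

lemma gA_simp[simp]: "gA d (x, y) = (y, x + y * d)" by (simp add: gA_def)
lemma gB_simp[simp]: "gB c (x, y) = (x + y * c, y)" by (simp add: gB_def)
lemma sw_simp[simp]: "sw (x, y) = (y, x)" by (simp add: sw_def)

lemma gA_iso: "isoL (gA d)"
  unfolding isoL_def
proof (intro conjI allI)
  show "bij (gA d)"
    by (rule o_bij[where g = "\<lambda>v. (snd v - fst v * d, fst v)"]) (auto simp: fun_eq_iff gA_def)
qed (auto simp: gA_def smult2_def algebra_simps)

lemma gB_iso: "isoL (gB d)"
  unfolding isoL_def
proof (intro conjI allI)
  show "bij (gB d)"
    by (rule o_bij[where g = "\<lambda>v. (fst v - snd v * d, snd v)"]) (auto simp: fun_eq_iff gB_def)
qed (auto simp: gB_def smult2_def algebra_simps)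

lemma gB_sw_pt: "gB c v = sw (gA c v)" by (cases v) simp
lemma gB_sw: "gB c ` S = sw ` (gA c ` S)"
  by (simp add: image_image gB_sw_pt)

lemma sw_sw[simp]: "sw (sw v) = v" by (simp add: sw_def)
lemma sw_image_sw[simp]: "sw ` (sw ` S) = S" by (simp add: image_image)

context cdvr begin

lemma fin_contains_e:
  assumes L: "is_submodule2 L" and fin: "finite (quot2 L)"
  shows "\<exists>i. smult2 (pi ^ i) e \<in> L"
proof -
  define f where "f k = coset2 L (smult2 (pi ^ k) e)" for k
  have "range f \<subseteq> quot2 L" unfolding f_def quot2_def by auto
  then have "finite (range f)" using fin finite_subset by blast
  then have "\<not> inj f" using finite_imageD infinite_UNIV_nat by blast
  then obtain i j where ij: "i \<noteq> j" "f i = f j" unfolding inj_def by blast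
  have key: "smult2 (pi ^ i) e \<in> L" if "i < j" "f i = f j" for i j
  proof -
    have "smult2 (pi ^ i) e - smult2 (pi ^ j) e \<in> L" using that coset_eq[OF L] unfolding f_def by blast
    moreover have "smult2 (pi ^ i) e - smult2 (pi ^ j) e = smult2 (pi ^ i * (1 - pi ^ (j - i) * 1)) e"
    proof -
      have "pi ^ j = pi ^ i * pi ^ (j - i)" using that by (simp add: power_add[symmetric])
      then show ?thesis by (cases e) (simp add: smult2_def algebra_simps)
    qed
    ultimately have h: "smult2 (pi ^ i * (1 - pi ^ (j - i))) e \<in> L" by simp
    have "(1 - pi ^ (j - i)) dvd 1" using one_minus_unit[of "j - i" 1] that by simp
    then obtain u' where u': "1 = (1 - pi ^ (j - i)) * u'" by (rule dvdE)
    have "smult2 u' (smult2 (pi ^ i * (1 - pi ^ (j - i))) e) \<in> L" using h sub_smult[OF L] by blast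
    moreover have "smult2 u' (smult2 (pi ^ i * (1 - pi ^ (j - i))) e) = smult2 (pi ^ i) e"
    proof -
      obtain a b where e: "e = (a, b)" by (cases e)
      have "u' * (pi ^ i * (1 - pi ^ (j - i)) * z) = pi ^ i * z * ((1 - pi ^ (j - i)) * u')" for z
        by (simp only: ac_simps)
      then show ?thesis unfolding e using u'[symmetric] by simp
    qed
    ultimately show ?thesis by simp
  qed
  show ?thesis
  proof (cases "i < j")
    case True then show ?thesis using key ij by blast
  next
    case False then have "j < i" using ij by simp
    then show ?thesis using key ij by metis
  qed
qed

lemma fin_contains:
  assumes L: "is_submodule2 L" and fin: "finite (quot2 L)"
  shows "\<exists>N. lat2 pi N N \<subseteq> L"
proof -
  obtain i where i: "smult2 (pi ^ i) (1, 0) \<in> L" using fin_contains_e[OF assms] by blast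
  obtain j where j: "smult2 (pi ^ j) (0, 1) \<in> L" using fin_contains_e[OF assms] by blast
  have a: "(pi ^ (i + j), 0) \<in> L"
  proof -
    have "smult2 (pi ^ j) (smult2 (pi ^ i) (1, 0)) \<in> L" using i sub_smult[OF L] by blast
    then show ?thesis by (simp add: power_add mult.commute)
  qed
  have b: "(0, pi ^ (i + j)) \<in> L"
  proof -
    have "smult2 (pi ^ i) (smult2 (pi ^ j) (0, 1)) \<in> L" using j sub_smult[OF L] by blast
    then show ?thesis by (simp add: power_add mult.commute)
  qed
  have "lat2 pi (i + j) (i + j) \<subseteq> L"
  proof
    fix v assume "v \<in> lat2 pi (i + j) (i + j)"
    then obtain x y where v: "v = (pi ^ (i + j) * x, pi ^ (i + j) * y)" unfolding lat2_def by auto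
    have "smult2 x (pi ^ (i + j), 0) + smult2 y (0, pi ^ (i + j)) \<in> L"
      using a b sub_smult[OF L] sub_add[OF L] by blast
    then show "v \<in> L" using v by (simp add: mult.commute)
  qed
  then show ?thesis by blast
qed

lemma lat2_quot: "quot2 (lat2 pi l1 l2) = (\<lambda>(a, b). coset2 (lat2 pi l1 l2) (a, b)) ` (reps l1 \<times> reps l2)"
proof
  show "quot2 (lat2 pi l1 l2) \<subseteq> (\<lambda>(a, b). coset2 (lat2 pi l1 l2) (a, b)) ` (reps l1 \<times> reps l2)"
  proof
    fix C assume "C \<in> quot2 (lat2 pi l1 l2)"
    then obtain x y where C: "C = coset2 (lat2 pi l1 l2) (x, y)" unfolding quot2_def by auto
    obtain a where a: "a \<in> reps l1" "pi ^ l1 dvd x - a" using reps_ex by blast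
    obtain b where b: "b \<in> reps l2" "pi ^ l2 dvd y - b" using reps_ex by blast
    have "C = coset2 (lat2 pi l1 l2) (a, b)" unfolding C coset_eq[OF lat2_sub] using a b
      by (simp add: mem_lat2)
    then show "C \<in> (\<lambda>(a, b). coset2 (lat2 pi l1 l2) (a, b)) ` (reps l1 \<times> reps l2)"
      using a b by force
  qed
qed (auto simp: quot2_def)

lemma lat2_index: "finite (quot2 (lat2 pi l1 l2)) \<and> index2 (lat2 pi l1 l2) = q ^ (l1 + l2)"
proof -
  have "inj_on (\<lambda>(a, b). coset2 (lat2 pi l1 l2) (a, b)) (reps l1 \<times> reps l2)"
  proof (rule inj_onI, clarify)
    fix a b a' b' assume h: "a \<in> reps l1" "b \<in> reps l2" "a' \<in> reps l1" "b' \<in> reps l2"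
      "coset2 (lat2 pi l1 l2) (a, b) = coset2 (lat2 pi l1 l2) (a', b')"
    then have "pi ^ l1 dvd a - a'" "pi ^ l2 dvd b - b'"
      unfolding coset_eq[OF lat2_sub] by (simp_all add: mem_lat2)
    then show "a = a' \<and> b = b'" using h reps_uniq by blast
  qed
  then show ?thesis unfolding index2_def lat2_quot using reps_card
    by (simp add: card_image card_cartesian_product power_add)
qed

end


lemma smult_image_iso: "isoL g \<Longrightarrow> smult2 c ` (g ` A) = g ` (smult2 c ` A)"
  by (simp add: image_image isoL_smult)

lemma smult_lat2: "smult2 (p ^ r0) ` lat2 p m 0 = lat2 (p::'a::comm_ring_1) (r0 + m) r0"
proof
  show "smult2 (p ^ r0) ` lat2 p m 0 \<subseteq> lat2 p (r0 + m) r0"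
    unfolding lat2_def by (auto simp: power_add algebra_simps)
next
  show "lat2 p (r0 + m) r0 \<subseteq> smult2 (p ^ r0) ` lat2 p m 0"
  proof
    fix v assume "v \<in> lat2 p (r0 + m) r0"
    then obtain x y where v: "v = (p ^ (r0 + m) * x, p ^ r0 * y)" unfolding lat2_def by auto
    have "v = smult2 (p ^ r0) (p ^ m * x, p ^ 0 * y)" using v by (simp add: power_add algebra_simps)
    moreover have "(p ^ m * x, p ^ 0 * y) \<in> lat2 p m 0" unfolding lat2_def by blast
    ultimately show "v \<in> smult2 (p ^ r0) ` lat2 p m 0" by blast
  qed
qed

lemma sw_iso: "isoL (sw :: 'a::comm_ring_1 \<times> 'a \<Rightarrow> _)"
  unfolding isoL_def
proof (intro conjI allI)
  show "bij (sw :: 'a \<times> 'a \<Rightarrow> _)" by (rule o_bij[where g = sw]) (auto simp: fun_eq_iff)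
qed (auto simp: sw_def smult2_def)

lemma G_lemma:
  assumes K: "is_submodule2 K" and v1: "(1, d0) \<in> K" and v2: "(0, p ^ m) \<in> K"
    and dv: "\<And>y. (0, y) \<in> K \<Longrightarrow> p ^ m dvd y" and dd: "p ^ m dvd d - d0"
  shows "K = gA d ` lat2 (p :: 'a :: comm_ring_1) m 0"
proof
  obtain z where z: "d - d0 = p ^ m * z" using dd by (rule dvdE)
  have "(1, d) = (1, d0) + smult2 z (0, p ^ m)" using z by (simp add: algebra_simps)
  then have v1': "(1, d) \<in> K" using v1 v2 sub_add[OF K] sub_smult[OF K] by metis
  show "gA d ` lat2 p m 0 \<subseteq> K"
  proof
    fix v assume "v \<in> gA d ` lat2 p m 0"
    then obtain x y where v: "v = gA d (p ^ m * x, p ^ 0 * y)" unfolding lat2_def by auto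
    have "v = smult2 y (1, d) + smult2 x (0, p ^ m)" using v by (simp add: algebra_simps)
    then show "v \<in> K" using v1' v2 sub_add[OF K] sub_smult[OF K] by metis
  qed
  show "K \<subseteq> gA d ` lat2 p m 0"
  proof
    fix v assume vK: "v \<in> K"
    obtain w1 w2 where v: "v = (w1, w2)" by (cases v)
    have "(0, w2 - w1 * d) = v - smult2 w1 (1, d)" using v by (simp add: algebra_simps)
    then have "(0, w2 - w1 * d) \<in> K" using vK v1' sub_diff[OF K] sub_smult[OF K] by metis
    then obtain x where x: "w2 - w1 * d = p ^ m * x" using dv by (meson dvdE)
    have "v = gA d (p ^ m * x, p ^ 0 * w1)" using v x by (simp add: algebra_simps)
    moreover have "(p ^ m * x, p ^ 0 * w1) \<in> lat2 p m 0" unfolding lat2_def by blast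
    ultimately show "v \<in> gA d ` lat2 p m 0" by blast
  qed
qed

definition gW :: "'a::comm_ring_1 + 'a \<Rightarrow> 'a \<times> 'a \<Rightarrow> 'a \<times> 'a" where
  "gW w = (case w of Inl d \<Rightarrow> gA d | Inr c \<Rightarrow> gB c)"

lemma gW_simps[simp]: "gW (Inl d) = gA d" "gW (Inr c) = gB c" by (simp_all add: gW_def)

lemma gW_iso: "isoL (gW w)" by (cases w) (simp_all add: gA_iso gB_iso)

definition vecW :: "'a::comm_ring_1 + 'a \<Rightarrow> 'a \<times> 'a" where
  "vecW w = (case w of Inl d \<Rightarrow> (1, d) | Inr c \<Rightarrow> (c, 1))"

context cdvr begin

definition W :: "nat \<Rightarrow> ('a + 'a) set" where
  "W r1 = Inl ` reps r1 \<union> Inr ` {pi * e | e. e \<in> reps (r1 - 1) \<and> r1 \<noteq> 0}"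

definition Phi :: "nat \<times> nat \<times> ('a + 'a) \<Rightarrow> ('a \<times> 'a) set" where
  "Phi x = (case x of (r0, r1, w) \<Rightarrow> gW w ` lat2 pi (r0 + r1) r0)"

definition Lat :: "('a \<times> 'a) set set" where
  "Lat = {L. is_submodule2 L \<and> finite (quot2 L)}"

definition PP :: "(nat \<times> nat \<times> ('a + 'a)) set" where
  "PP = (SIGMA r0:UNIV. SIGMA r1:UNIV. W r1)"

lemma W_card: "finite (W r1) \<and> card (W r1) = q ^ r1 + (if r1 = 0 then 0 else q ^ (r1 - 1))"
proof (cases r1)
  case 0 then show ?thesis using reps_card[of 0] by (simp add: W_def)
next
  case (Suc n)
  have e: "{pi * e | e. e \<in> reps (r1 - 1) \<and> r1 \<noteq> 0} = (\<lambda>e. pi * e) ` reps n" using Suc by auto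
  have inj: "inj_on (\<lambda>e. pi * e) (reps n)" using pi_nz by (auto simp: inj_on_def)
  have f1: "finite (reps r1)" "finite (reps n)" using reps_card by auto
  have "card (W r1) = card (Inl ` reps r1 :: ('a + 'a) set) + card (Inr ` ((\<lambda>e. pi * e) ` reps n) :: ('a + 'a) set)"
    unfolding W_def e using f1 by (intro card_Un_disjoint) auto
  also have "\<dots> = q ^ r1 + q ^ n" using reps_card[of r1] reps_card[of n] inj by (simp add: card_image del: reps.simps)
  finally have "card (W r1) = q ^ r1 + q ^ n" .
  moreover have "finite (W r1)" unfolding W_def e using f1 by (simp del: reps.simps)
  ultimately show ?thesis using Suc by simp
qed

lemma Phi_Lat: "Phi (r0, r1, w) \<in> Lat"
proof -
  have "finite (quot2 (lat2 pi (r0 + r1) r0))" using lat2_index by blast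
  then have "finite (quot2 (gW w ` lat2 pi (r0 + r1) r0))"
    using iso_index(2)[OF gW_iso, of w "lat2 pi (r0 + r1) r0"] by blast
  then show ?thesis
    unfolding Phi_def Lat_def using iso_sub[OF gW_iso lat2_sub, of w pi "r0 + r1" r0] by auto
qed

lemma Phi_index: "index2 (Phi (r0, r1, w)) = q ^ (2 * r0 + r1)"
proof -
  have "index2 (Phi (r0, r1, w)) = index2 (lat2 pi (r0 + r1) r0)"
    unfolding Phi_def using iso_index(1)[OF gW_iso] by simp
  also have "\<dots> = q ^ (r0 + r1 + r0)" using lat2_index by blast
  also have "r0 + r1 + r0 = 2 * r0 + r1" by simp
  finally show ?thesis .
qed

lemma Phi_Zs: "Zs (Phi (r0, r1, w)) s = zeta_lambda pi (r0 + r1) r0 s"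
proof -
  have "finite (quot2 (lat2 pi (r0 + r1) r0))" using lat2_index by blast
  then have "zeta_lambda pi (r0 + r1) r0 s = Zs (lat2 pi (r0 + r1) r0) s" by (rule zeta_lambda_Zs)
  moreover have "Zs (gW w ` lat2 pi (r0 + r1) r0) s = Zs (lat2 pi (r0 + r1) r0) s" by (rule iso_Zs[OF gW_iso])
  ultimately show ?thesis unfolding Phi_def by simp
qed

lemma sub_exists_m:
  assumes K: "is_submodule2 K" and N: "(0, pi ^ N) \<in> K"
  shows "\<exists>m. (0, pi ^ m) \<in> K \<and> (\<forall>y. (0, y) \<in> K \<longrightarrow> pi ^ m dvd y)"
proof -
  define m where "m = (LEAST m. (0, pi ^ m) \<in> K)"
  have m: "(0, pi ^ m) \<in> K" unfolding m_def using N by (rule LeastI)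
  have "pi ^ m dvd y" if y: "(0, y) \<in> K" for y
  proof (cases "y = 0")
    case False
    then obtain u n where u: "u dvd 1" "y = u * pi ^ n" using factor by blast
    from u(1) obtain u' where u': "1 = u * u'" by (rule dvdE)
    have "smult2 u' (0, y) \<in> K" using y sub_smult[OF K] by blast
    moreover have "smult2 u' (0, y) = (0, pi ^ n)" using u u' by (simp add: algebra_simps)
    ultimately have "(0, pi ^ n) \<in> K" by simp
    then have "m \<le> n" unfolding m_def by (rule Least_le)
    then have "pi ^ m dvd pi ^ n" by (simp add: pow_dvd_pow_iff)
    then show ?thesis using u by simp
  qed simp
  then show ?thesis using m by blast
qed

lemma Lat_Phi: assumes L: "L \<in> Lat" shows "\<exists>r0 r1 w. w \<in> W r1 \<and> L = Phi (r0, r1, w)"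
proof -
  have Ls: "is_submodule2 L" and fin: "finite (quot2 L)" using L by (auto simp: Lat_def)
  obtain N where N: "lat2 pi N N \<subseteq> L" using fin_contains[OF Ls fin] by blast
  have "(pi ^ N, 0) \<in> lat2 pi N N" "(0, pi ^ N) \<in> lat2 pi N N" by (simp_all add: mem_lat2)
  then have e1: "(pi ^ N, 0) \<in> L" and e2: "(0, pi ^ N) \<in> L" using N by auto
  define D where "D r \<longleftrightarrow> (\<forall>v\<in>L. pi ^ r dvd fst v \<and> pi ^ r dvd snd v)" for r
  have nD: "\<not> D (Suc N)"
  proof
    assume "D (Suc N)"
    then have "pi ^ Suc N dvd pi ^ N" using e1 unfolding D_def by fastforce
    then have "Suc N \<le> N" using pow_dvd_pow_iff by blast
    then show False by simp
  qed
  define r0 where "r0 = (LEAST r. \<not> D (Suc r))"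
  have nD0: "\<not> D (Suc r0)" unfolding r0_def using nD by (rule LeastI)
  have D0: "D r0"
  proof (cases r0)
    case 0 then show ?thesis by (simp add: D_def)
  next
    case (Suc r')
    then have "r' < r0" by simp
    then have "\<not> \<not> D (Suc r')" unfolding r0_def by (rule not_less_Least)
    then show ?thesis using Suc by simp
  qed
  define L' where "L' = {w. smult2 (pi ^ r0) w \<in> L}"
  have L's: "is_submodule2 L'"
    unfolding is_submodule2_def L'_def
  proof (intro conjI ballI allI CollectI)
    show "smult2 (pi ^ r0) 0 \<in> L" using sub_zero[OF Ls] by (simp add: smult2_def zero_prod_def)
  next
    fix x y assume "x \<in> {w. smult2 (pi ^ r0) w \<in> L}" "y \<in> {w. smult2 (pi ^ r0) w \<in> L}"
    then have "smult2 (pi ^ r0) x + smult2 (pi ^ r0) y \<in> L" using sub_add[OF Ls] by blast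
    moreover have "smult2 (pi ^ r0) x + smult2 (pi ^ r0) y = smult2 (pi ^ r0) (x + y)"
      by (simp add: smult2_def algebra_simps)
    ultimately show "smult2 (pi ^ r0) (x + y) \<in> L" by simp
  next
    fix r x assume "x \<in> {w. smult2 (pi ^ r0) w \<in> L}"
    then have "smult2 r (smult2 (pi ^ r0) x) \<in> L" using sub_smult[OF Ls] by blast
    moreover have "smult2 r (smult2 (pi ^ r0) x) = smult2 (pi ^ r0) (smult2 r x)"
      by (simp add: smult2_def algebra_simps)
    ultimately show "smult2 (pi ^ r0) (smult2 r x) \<in> L" by simp
  qed
  have LL': "L = smult2 (pi ^ r0) ` L'"
  proof
    show "L \<subseteq> smult2 (pi ^ r0) ` L'"
    proof
      fix v assume v: "v \<in> L"
      then obtain a b where ab: "fst v = pi ^ r0 * a" "snd v = pi ^ r0 * b" using D0 unfolding D_def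
        by (meson dvdE)
      then have vv: "v = smult2 (pi ^ r0) (a, b)" by (cases v) simp
      then have "(a, b) \<in> L'" using v unfolding L'_def by simp
      then show "v \<in> smult2 (pi ^ r0) ` L'" using vv by (rule rev_image_eqI)
    qed
  qed (auto simp: L'_def)
  have LsubL': "L \<subseteq> L'" unfolding L'_def using sub_smult[OF Ls] by blast
  obtain v0 where v0: "v0 \<in> L" "\<not> (pi ^ Suc r0 dvd fst v0 \<and> pi ^ Suc r0 dvd snd v0)"
    using nD0 unfolding D_def by blast
  obtain w0 where w0: "w0 \<in> L'" "v0 = smult2 (pi ^ r0) w0" using v0(1) LL' by blast
  have w0u: "\<not> (pi dvd fst w0 \<and> pi dvd snd w0)"
  proof
    assume "pi dvd fst w0 \<and> pi dvd snd w0"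
    then have "pi ^ r0 * pi dvd pi ^ r0 * fst w0 \<and> pi ^ r0 * pi dvd pi ^ r0 * snd w0"
      by (simp add: mult_dvd_mono)
    then show False using v0(2) w0(2) by (cases w0) (simp add: mult.commute)
  qed
  have scale: "L = gW w ` lat2 pi (r0 + m) r0" if "L' = gW w ` lat2 pi m 0" for w m
    using LL' that by (simp add: smult_image_iso[OF gW_iso] smult_lat2)
  show ?thesis
  proof (cases "\<exists>w\<in>L'. fst w dvd 1")
    case True
    then obtain w u' where w: "w \<in> L'" "1 = fst w * u'" by (meson dvdE)
    define d0 where "d0 = u' * snd w"
    have "smult2 u' w = (1, d0)" using w(2) unfolding d0_def by (cases w) (simp add: mult.commute)
    then have v1: "(1, d0) \<in> L'" using w(1) sub_smult[OF L's] by metis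
    obtain m where m: "(0, pi ^ m) \<in> L'" "\<forall>y. (0, y) \<in> L' \<longrightarrow> pi ^ m dvd y"
      using sub_exists_m[OF L's] e2 LsubL' by blast
    obtain d where d: "d \<in> reps m" "pi ^ m dvd d0 - d" using reps_ex by blast
    have "L' = gA d ` lat2 pi m 0"
      using G_lemma[OF L's v1 m(1)] m(2) dvd_sub_sym[OF d(2)] by blast
    then have "L = Phi (r0, m, Inl d)" using scale[of "Inl d" m] by (simp add: Phi_def)
    moreover have "Inl d \<in> W m" using d by (simp add: W_def)
    ultimately show ?thesis by blast
  next
    case False
    then have allpi: "\<forall>w\<in>L'. pi dvd fst w" using nondvd_unit by blast
    then have "\<not> pi dvd snd w0" using w0u w0(1) by blast
    then have "snd w0 dvd 1" by (rule nondvd_unit)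
    then obtain u' where u': "1 = snd w0 * u'" by (rule dvdE)
    define K where "K = sw ` L'"
    have Ks: "is_submodule2 K" unfolding K_def by (rule iso_sub[OF sw_iso L's])
    define c0 where "c0 = u' * fst w0"
    have h1: "sw (smult2 u' w0) = (1, c0)" using u' unfolding c0_def by (cases w0) (simp add: mult.commute)
    have h2: "smult2 u' w0 \<in> L'" using w0(1) sub_smult[OF L's] by blast
    have v1: "(1, c0) \<in> K" unfolding K_def by (rule rev_image_eqI[where f = sw, OF h2 h1[symmetric]])
    have "pi dvd c0" unfolding c0_def using allpi w0(1) by simp
    then obtain e0 where e0: "c0 = pi * e0" by (rule dvdE)
    have "(pi ^ N, 0) \<in> L'" using e1 LsubL' by blast
    then have "sw (pi ^ N, 0) \<in> K" unfolding K_def by (rule imageI)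
    then have "(0, pi ^ N) \<in> K" by simp
    then obtain m where m: "(0, pi ^ m) \<in> K" "\<forall>y. (0, y) \<in> K \<longrightarrow> pi ^ m dvd y"
      using sub_exists_m[OF Ks] by blast
    have "(pi ^ m, 0) \<in> L'"
    proof -
      obtain w where "w \<in> L'" "(0, pi ^ m) = sw w" using m(1) unfolding K_def by blast
      then have "w = (pi ^ m, 0)" by (cases w) simp
      then show ?thesis using \<open>w \<in> L'\<close> by simp
    qed
    then have "pi dvd pi ^ m" using allpi by fastforce
    then have "m \<noteq> 0" using pi_nunit by (cases m) auto
    then obtain n where n: "m = Suc n" by (cases m) auto
    obtain e where e: "e \<in> reps n" "pi ^ n dvd e0 - e" using reps_ex by blast
    have "pi ^ m dvd pi * e - c0"
    proof -
      have "pi * pi ^ n dvd pi * (e - e0)" using dvd_sub_sym[OF e(2)] by (simp add: mult_dvd_mono)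
      then show ?thesis using n e0 by (simp add: algebra_simps)
    qed
    then have "K = gA (pi * e) ` lat2 pi m 0"
      using G_lemma[OF Ks v1 m(1)] m(2) by blast
    then have "sw ` K = sw ` (gA (pi * e) ` lat2 pi m 0)" by simp
    then have "L' = gB (pi * e) ` lat2 pi m 0" unfolding gB_sw K_def by simp
    then have "L = Phi (r0, m, Inr (pi * e))" using scale[of "Inr (pi * e)" m] by (simp add: Phi_def)
    moreover have "Inr (pi * e) \<in> W m" using e n by (auto simp: W_def)
    ultimately show ?thesis by blast
  qed
qed

end


context cdvr begin

lemma canc: "pi ^ r * a = pi ^ r * b \<Longrightarrow> a = b" using pi_nz by simp

lemma Phi_memE:
  assumes "v \<in> Phi (r0, r1, w)"
  obtains x y where "v = gW w (pi ^ (r0 + r1) * x, pi ^ r0 * y)"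
  using assms unfolding Phi_def lat2_def by auto

lemma Phi_dvd: assumes "v \<in> Phi (r0, r1, w)" shows "pi ^ r0 dvd fst v" "pi ^ r0 dvd snd v"
proof -
  obtain x y where v: "v = gW w (pi ^ (r0 + r1) * x, pi ^ r0 * y)" using assms by (rule Phi_memE)
  have "fst v = pi ^ r0 * (case w of Inl d \<Rightarrow> y | Inr c \<Rightarrow> pi ^ r1 * x + y * c) \<and>
        snd v = pi ^ r0 * (case w of Inl d \<Rightarrow> pi ^ r1 * x + y * d | Inr c \<Rightarrow> y)"
    using v by (cases w) (simp_all add: power_add algebra_simps)
  then show "pi ^ r0 dvd fst v" "pi ^ r0 dvd snd v" by (metis dvd_triv_left)+
qed

lemma Phi_vec: "smult2 (pi ^ r0) (vecW w) \<in> Phi (r0, r1, w)"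
proof -
  have "(0, pi ^ r0) \<in> lat2 pi (r0 + r1) r0" by (simp add: mem_lat2)
  moreover have "smult2 (pi ^ r0) (vecW w) = gW w (0, pi ^ r0)" by (cases w) (simp_all add: vecW_def)
  ultimately show ?thesis unfolding Phi_def by simp
qed

lemma vecW_one: "fst (vecW w) = 1 \<or> snd (vecW w) = 1" by (cases w) (simp_all add: vecW_def)

lemma Phi_r0_le: assumes "Phi (r0, r1, w) = Phi (r0', r1', w')" shows "r0' \<le> r0"
proof -
  have "smult2 (pi ^ r0) (vecW w) \<in> Phi (r0, r1, w)" by (rule Phi_vec)
  then have m: "smult2 (pi ^ r0) (vecW w) \<in> Phi (r0', r1', w')" using assms by simp
  have "fst (smult2 (pi ^ r0) (vecW w)) = pi ^ r0 * fst (vecW w)"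
    "snd (smult2 (pi ^ r0) (vecW w)) = pi ^ r0 * snd (vecW w)" by (simp_all add: smult2_def)
  then have "pi ^ r0' dvd pi ^ r0 * fst (vecW w)" "pi ^ r0' dvd pi ^ r0 * snd (vecW w)"
    using Phi_dvd[OF m] by simp_all
  then have "pi ^ r0' dvd pi ^ r0" using vecW_one[of w] by auto
  then show ?thesis by (simp add: pow_dvd_pow_iff)
qed

lemma W_cases:
  assumes "w \<in> W r1"
  obtains d where "w = Inl d" "d \<in> reps r1"
  | e where "w = Inr (pi * e)" "e \<in> reps (r1 - 1)" "r1 \<noteq> 0"
  using assms unfolding W_def by auto

lemma pi_dvd_pow: "r \<noteq> 0 \<Longrightarrow> pi dvd pi ^ r * x"
  by (cases r) auto

lemma Phi_w:
  assumes w: "w \<in> W r1" and w': "w' \<in> W r1" and mem: "smult2 (pi ^ r0) (vecW w) \<in> Phi (r0, r1, w')"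
  shows "w = w'"
proof -
  obtain x y where xy: "smult2 (pi ^ r0) (vecW w) = gW w' (pi ^ (r0 + r1) * x, pi ^ r0 * y)"
    using mem by (rule Phi_memE)
  have pa: "pi ^ (r0 + r1) * x = pi ^ r0 * (pi ^ r1 * x)" by (simp add: power_add)
  show ?thesis
  proof (cases rule: W_cases[OF w])
    case (1 d)
    show ?thesis
    proof (cases rule: W_cases[OF w'])
      case (1 d')
      from xy have a: "pi ^ r0 * 1 = pi ^ r0 * y" and b: "pi ^ r0 * d = pi ^ (r0 + r1) * x + pi ^ r0 * y * d'"
        using \<open>w = Inl d\<close> 1 by (simp_all add: vecW_def)
      have "pi ^ (r0 + r1) * x + pi ^ r0 * y * d' = pi ^ r0 * (pi ^ r1 * x + y * d')"
        by (simp add: power_add algebra_simps)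
      then have "y = 1" "d = pi ^ r1 * x + y * d'" using canc a b by (metis, metis)
      then have "pi ^ r1 dvd d - d'" by simp
      then have "d = d'" using reps_uniq[OF \<open>d \<in> reps r1\<close> \<open>d' \<in> reps r1\<close>] by blast
      then show ?thesis using \<open>w = Inl d\<close> 1 by simp
    next
      case (2 e')
      from xy have a: "pi ^ r0 * 1 = pi ^ (r0 + r1) * x + pi ^ r0 * y * (pi * e')"
        using \<open>w = Inl d\<close> 2 by (simp add: vecW_def)
      have "pi ^ (r0 + r1) * x + pi ^ r0 * y * (pi * e') = pi ^ r0 * (pi ^ r1 * x + pi * (y * e'))"
        by (simp add: power_add algebra_simps)
      then have "1 = pi ^ r1 * x + pi * (y * e')" using canc a by metis
      moreover have "pi dvd pi ^ r1 * x + pi * (y * e')" using pi_dvd_pow[OF \<open>r1 \<noteq> 0\<close>] by simp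
      ultimately show ?thesis using pi_nunit by simp
    qed
  next
    case (2 e)
    show ?thesis
    proof (cases rule: W_cases[OF w'])
      case (1 d')
      from xy have a: "pi ^ r0 * (pi * e) = pi ^ r0 * y" and b: "pi ^ r0 * 1 = pi ^ (r0 + r1) * x + pi ^ r0 * y * d'"
        using \<open>w = Inr (pi * e)\<close> 1 by (simp_all add: vecW_def)
      have "pi ^ (r0 + r1) * x + pi ^ r0 * y * d' = pi ^ r0 * (pi ^ r1 * x + y * d')"
        by (simp add: power_add algebra_simps)
      then have "y = pi * e" "1 = pi ^ r1 * x + y * d'" using canc a b by (metis, metis)
      then have "1 = pi ^ r1 * x + pi * (e * d')" by (simp add: algebra_simps)
      moreover have "pi dvd pi ^ r1 * x + pi * (e * d')" using pi_dvd_pow[OF \<open>r1 \<noteq> 0\<close>] by simp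
      ultimately show ?thesis using pi_nunit by simp
    next
      case (2 e')
      from xy have a: "pi ^ r0 * (pi * e) = pi ^ (r0 + r1) * x + pi ^ r0 * y * (pi * e')" and b: "pi ^ r0 * 1 = pi ^ r0 * y"
        using \<open>w = Inr (pi * e)\<close> 2 by (simp_all add: vecW_def)
      have "pi ^ (r0 + r1) * x + pi ^ r0 * y * (pi * e') = pi ^ r0 * (pi ^ r1 * x + y * (pi * e'))"
        by (simp add: power_add algebra_simps)
      then have "y = 1" "pi * e = pi ^ r1 * x + y * (pi * e')" using canc a b by (metis, metis)
      moreover have "pi ^ r1 = pi * pi ^ (r1 - 1)" using \<open>r1 \<noteq> 0\<close> by (cases r1) auto
      ultimately have "pi * e = pi * (pi ^ (r1 - 1) * x + e')" by (simp add: algebra_simps)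
      then have "e = pi ^ (r1 - 1) * x + e'" using pi_nz by simp
      then have "pi ^ (r1 - 1) dvd e - e'" by simp
      then have "e = e'" using reps_uniq[OF \<open>e \<in> reps (r1 - 1)\<close> \<open>e' \<in> reps (r1 - 1)\<close>] by blast
      then show ?thesis using \<open>w = Inr (pi * e)\<close> 2 by simp
    qed
  qed
qed

lemma Phi_inj: "inj_on Phi PP"
proof (rule inj_onI)
  fix X Y assume X: "X \<in> PP" and Y: "Y \<in> PP" and e: "Phi X = Phi Y"
  obtain r0 r1 w where Xd: "X = (r0, r1, w)" "w \<in> W r1" using X unfolding PP_def by auto
  obtain r0' r1' w' where Yd: "Y = (r0', r1', w')" "w' \<in> W r1'" using Y unfolding PP_def by auto
  have e': "Phi (r0, r1, w) = Phi (r0', r1', w')" using e Xd Yd by simp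
  have "r0 = r0'" using Phi_r0_le[OF e'] Phi_r0_le[OF e'[symmetric]] by simp
  have "index2 (Phi (r0, r1, w)) = index2 (Phi (r0', r1', w'))" using e' by simp
  then have "q ^ (2 * r0 + r1) = q ^ (2 * r0' + r1')" by (simp only: Phi_index)
  then have "2 * r0 + r1 = 2 * r0' + r1'" using q_ge2 by (simp add: power_inject_exp)
  then have "r1 = r1'" using \<open>r0 = r0'\<close> by simp
  have "smult2 (pi ^ r0) (vecW w) \<in> Phi (r0, r1, w')" using Phi_vec[of r0 w r1] e' \<open>r0 = r0'\<close> \<open>r1 = r1'\<close> by simp
  then have "w = w'" using Phi_w Xd Yd \<open>r1 = r1'\<close> by blast
  then show "X = Y" using Xd Yd \<open>r0 = r0'\<close> \<open>r1 = r1'\<close> by simp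
qed

lemma Phi_bij: "bij_betw Phi PP Lat"
  unfolding bij_betw_def
proof
  show "inj_on Phi PP" by (rule Phi_inj)
  show "Phi ` PP = Lat"
  proof
    show "Phi ` PP \<subseteq> Lat" unfolding PP_def using Phi_Lat by auto
    show "Lat \<subseteq> Phi ` PP"
    proof
      fix L assume "L \<in> Lat"
      then obtain r0 r1 w where "w \<in> W r1" "L = Phi (r0, r1, w)" using Lat_Phi by blast
      then show "L \<in> Phi ` PP" unfolding PP_def by auto
    qed
  qed
qed

end


instance ennreal :: t3_space
proof
  fix S :: "ennreal set" and y :: ennreal
  assume S: "closed S" "y \<notin> S"
  then have o: "open (- S)" "y \<in> - S" by auto
  have L: "\<exists>a'. a' < y \<and> (\<forall>s\<in>S. s < a' \<or> y < s)" if y0: "0 < y"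
  proof -
    obtain a where a: "a < y" "{a<..y} \<subseteq> - S" using open_left[OF o(1) o(2) y0] by blast
    obtain a' where a': "a < a'" "a' < y" using dense[OF a(1)] by blast
    have "s < a' \<or> y < s" if "s \<in> S" for s
    proof -
      have "s \<notin> {a<..y}" using a(2) that by blast
      then have "s \<le> a \<or> y < s" by (auto simp: not_less)
      then show ?thesis using a'(1) by (meson le_less_trans)
    qed
    then show ?thesis using a' by blast
  qed
  have R: "\<exists>b'. y < b' \<and> (\<forall>s\<in>S. b' < s \<or> s < y)" if yt: "y < top"
  proof -
    obtain b where b: "y < b" "{y..<b} \<subseteq> - S" using open_right[OF o(1) o(2) yt] by blast
    obtain b' where b': "y < b'" "b' < b" using dense[OF b(1)] by blast
    have "b' < s \<or> s < y" if "s \<in> S" for s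
    proof -
      have "s \<notin> {y..<b}" using b(2) that by blast
      then have "b \<le> s \<or> s < y" by (auto simp: not_less)
      then show ?thesis using b'(2) by (meson less_le_trans)
    qed
    then show ?thesis using b' by blast
  qed
  show "\<exists>U V. open U \<and> open V \<and> y \<in> U \<and> S \<subseteq> V \<and> U \<inter> V = {}"
  proof (cases "y = 0")
    case True
    then have "y < top" by simp
    then obtain b' where b': "y < b'" "\<forall>s\<in>S. b' < s \<or> s < y" using R by blast
    show ?thesis
      by (rule exI[of _ "{..<b'}"], rule exI[of _ "{b'<..}"]) (use b' True in auto)
  next
    case False
    then have y0: "0 < y" using not_gr_zero by blast
    obtain a' where a': "a' < y" "\<forall>s\<in>S. s < a' \<or> y < s" using L[OF y0] by blast
    show ?thesis
    proof (cases "y = top")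
      case True
      show ?thesis
        by (rule exI[of _ "{a'<..}"], rule exI[of _ "{..<a'}"]) (use a' True in auto)
    next
      case False
      then have "y < top" by (simp add: top.not_eq_extremum)
      then obtain b' where b': "y < b'" "\<forall>s\<in>S. b' < s \<or> s < y" using R by blast
      show ?thesis
      proof (rule exI[of _ "{a'<..<b'}"], rule exI[of _ "{..<a'} \<union> {b'<..}"], intro conjI)
        show "S \<subseteq> {..<a'} \<union> {b'<..}"
        proof
          fix s assume "s \<in> S"
          then have "s < a' \<or> y < s" "b' < s \<or> s < y" using a' b' by auto
          then show "s \<in> {..<a'} \<union> {b'<..}" using a' b' by auto
        qed
      qed (use a' b' in auto)
    qed
  qed
qed

lemma ennreal_infsum_Sigma:
  fixes f :: "'x \<times> 'y \<Rightarrow> ennreal"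
  shows "infsum f (Sigma A B) = infsum (\<lambda>x. infsum (\<lambda>y. f (x, y)) (B x)) A"
proof -
  have s1: "f summable_on (Sigma A B)" by (rule nonneg_summable_on_complete) simp
  have s2: "(\<lambda>y. f (x, y)) summable_on (B x)" for x by (rule nonneg_summable_on_complete) simp
  have "(f has_sum infsum f (Sigma A B)) (Sigma A B)" using s1 by (rule has_sum_infsum)
  moreover have "\<And>x. x \<in> A \<Longrightarrow> ((\<lambda>y. f (x, y)) has_sum infsum (\<lambda>y. f (x, y)) (B x)) (B x)"
    using s2 has_sum_infsum by blast
  ultimately have "((\<lambda>x. infsum (\<lambda>y. f (x, y)) (B x)) has_sum infsum f (Sigma A B)) A"
    by (rule has_sum_SigmaD)
  then show ?thesis by (simp add: infsumI)
qed

lemma ennreal_infsum_cmult: "infsum (\<lambda>x. c * f x) A = (c::ennreal) * infsum f A"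
  by (simp add: nonneg_infsum_complete sum_distrib_left[symmetric] SUP_mult_left_ennreal)

lemma powr_nat_pow: "real (q ^ n) powr (- s) = (real q powr (- s)) ^ n"
  by (induction n) (simp_all add: powr_mult)

definition Psi :: "nat \<Rightarrow> ('a::comm_ring_1 \<times> 'a) set \<times> (nat \<Rightarrow> ('a \<times> 'a) set) \<Rightarrow> (nat \<Rightarrow> ('a \<times> 'a) set)" where
  "Psi a X = (\<lambda>i. if i = 1 then fst X else if i \<in> {2..a} then snd X i else UNIV)"

context cdvr begin

definition wt :: "real \<Rightarrow> ('a \<times> 'a) set \<Rightarrow> real" where
  "wt s L = real (index2 L) powr (- s)"

lemma above_finite: "L \<in> Lat \<Longrightarrow> finite (above L)"
proof -
  assume "L \<in> Lat"
  then have Ls: "is_submodule2 L" and fin: "finite (quot2 L)" by (auto simp: Lat_def)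
  have "quot_submodules L \<subseteq> Pow (quot2 L)" unfolding quot_submodules_def by auto
  then have "finite (quot_submodules L)" using fin finite_subset by blast
  then show ?thesis using above_bij[OF Ls] bij_betw_finite by blast
qed

lemma Psi_bij:
  assumes a: "a \<ge> 1"
  shows "bij_betw (Psi a) (SIGMA L1:Lat. PiE {2..a} (\<lambda>_. above L1)) (finite_index_subreps_V2a a)"
  unfolding bij_betw_def
proof (intro conjI)
  show "inj_on (Psi a) (SIGMA L1:Lat. PiE {2..a} (\<lambda>_. above L1))"
  proof (rule inj_onI)
    fix X Y assume X: "X \<in> (SIGMA L1:Lat. PiE {2..a} (\<lambda>_. above L1))"
      and Y: "Y \<in> (SIGMA L1:Lat. PiE {2..a} (\<lambda>_. above L1))" and e: "Psi a X = Psi a Y"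
    have 1: "fst X = fst Y" using fun_cong[OF e, of 1] by (simp add: Psi_def)
    have "snd X i = snd Y i" if "i \<in> {2..a}" for i
      using fun_cong[OF e, of i] that by (simp add: Psi_def)
    then have "snd X = snd Y" using X Y by (intro PiE_ext[of "snd X" "{2..a}" _ "snd Y"]) (auto simp: 1)
    then show "X = Y" using 1 by (simp add: prod_eq_iff)
  qed
next
  show "Psi a ` (SIGMA L1:Lat. PiE {2..a} (\<lambda>_. above L1)) = finite_index_subreps_V2a a"
  proof
    show "Psi a ` (SIGMA L1:Lat. PiE {2..a} (\<lambda>_. above L1)) \<subseteq> finite_index_subreps_V2a a"
    proof
      fix Lam assume "Lam \<in> Psi a ` (SIGMA L1:Lat. PiE {2..a} (\<lambda>_. above L1))"
      then obtain L1 f where L1: "L1 \<in> Lat" and f: "f \<in> PiE {2..a} (\<lambda>_. above L1)" and Lam: "Lam = Psi a (L1, f)"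
        by auto
      have Ls: "is_submodule2 L1" and fin: "finite (quot2 L1)" using L1 by (auto simp: Lat_def)
      have fj: "is_submodule2 (f j) \<and> L1 \<subseteq> f j \<and> finite (quot2 (f j))" if "j \<in> {2..a}" for j
      proof -
        have "f j \<in> above L1" using f that by auto
        then have "is_submodule2 (f j)" "L1 \<subseteq> f j" by (auto simp: above_def)
        then show ?thesis using quot_above_finite[OF Ls _ _ fin] by blast
      qed
      have c1: "\<forall>i. i \<notin> {1..a} \<longrightarrow> Lam i = UNIV" unfolding Lam Psi_def using a by auto
      have c2: "\<forall>i\<in>{1..a}. is_submodule2 (Lam i) \<and> finite_index2 (Lam i)"
      proof
        fix i assume i: "i \<in> {1..a}"
        show "is_submodule2 (Lam i) \<and> finite_index2 (Lam i)"
        proof (cases "i = 1")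
          case True then show ?thesis using Ls fin unfolding Lam Psi_def finite_index2_def by simp
        next
          case False then have "i \<in> {2..a}" using i by auto
          then show ?thesis using fj[of i] False unfolding Lam Psi_def finite_index2_def by simp
        qed
      qed
      have c3: "\<forall>ij\<in>star_arrows a. case ij of (i, j) \<Rightarrow> V2a_map (i, j) ` Lam i \<subseteq> Lam j"
      proof
        fix ij assume "ij \<in> star_arrows a"
        then obtain j where j: "ij = (1, j)" "j \<in> {2..a}" unfolding star_arrows_def by auto
        have "Lam 1 = L1" "Lam j = f j" using j unfolding Lam Psi_def by auto
        then show "case ij of (i, j) \<Rightarrow> V2a_map (i, j) ` Lam i \<subseteq> Lam j"
          using fj[OF j(2)] j(1) by (simp add: V2a_map_def)
      qed
      show "Lam \<in> finite_index_subreps_V2a a"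
        unfolding finite_index_subreps_V2a_def using c1 c2 c3 by blast
    qed
  next
    show "finite_index_subreps_V2a a \<subseteq> Psi a ` (SIGMA L1:Lat. PiE {2..a} (\<lambda>_. above L1))"
    proof
      fix Lam :: "nat \<Rightarrow> ('a \<times> 'a) set" assume Lam: "Lam \<in> finite_index_subreps_V2a a"
      have out: "Lam i = UNIV" if "i \<notin> {1..a}" for i using Lam that unfolding finite_index_subreps_V2a_def by blast
      have inn: "is_submodule2 (Lam i) \<and> finite_index2 (Lam i)" if "i \<in> {1..a}" for i
        using Lam that unfolding finite_index_subreps_V2a_def by blast
      have arr: "Lam 1 \<subseteq> Lam j" if "j \<in> {2..a}" for j
      proof -
        have "(1, j) \<in> star_arrows a" using that unfolding star_arrows_def by auto
        then have "V2a_map (1, j) ` Lam 1 \<subseteq> Lam j" using Lam unfolding finite_index_subreps_V2a_def by fast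
        then show ?thesis by (simp add: V2a_map_def)
      qed
      have h1: "Lam 1 \<in> Lat" using inn[of 1] a unfolding Lat_def finite_index2_def by auto
      have h2: "restrict Lam {2..a} \<in> PiE {2..a} (\<lambda>_. above (Lam 1))"
        using inn arr unfolding above_def by auto
      have h3: "Lam = Psi a (Lam 1, restrict Lam {2..a})"
      proof
        fix i show "Lam i = Psi a (Lam 1, restrict Lam {2..a}) i"
          using out[of i] by (auto simp: Psi_def)
      qed
      show "Lam \<in> Psi a ` (SIGMA L1:Lat. PiE {2..a} (\<lambda>_. above L1))"
        by (rule rev_image_eqI[where f = "Psi a", OF SigmaI[where B = "\<lambda>L1. PiE {2..a} (\<lambda>_. above L1)", OF h1 h2] h3])
    qed
  qed
qed

lemma inner_sum:
  assumes a: "a \<ge> 1" and L1: "L1 \<in> Lat"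
  shows "infsum (\<lambda>f. ennreal (\<Prod>i\<in>{1..a}. wt s (Psi a (L1, f) i))) (PiE {2..a} (\<lambda>_. above L1))
       = ennreal (wt s L1 * Zs L1 s ^ (a - 1))"
proof -
  have finA: "finite (above L1)" using above_finite[OF L1] .
  have finP: "finite (PiE {2..a} (\<lambda>_. above L1))" using finA by (simp add: finite_PiE)
  have wt0: "0 \<le> wt s L" for L by (simp add: wt_def)
  have e1: "{1..a} = insert 1 {2..a}" using a by auto
  have pr: "(\<Prod>i\<in>{1..a}. wt s (Psi a (L1, f) i)) = wt s L1 * (\<Prod>i\<in>{2..a}. wt s (f i))" for f
  proof -
    have "(\<Prod>i\<in>{1..a}. wt s (Psi a (L1, f) i)) = wt s (Psi a (L1, f) 1) * (\<Prod>i\<in>{2..a}. wt s (Psi a (L1, f) i))"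
      unfolding e1 by (simp add: prod.insert)
    also have "(\<Prod>i\<in>{2..a}. wt s (Psi a (L1, f) i)) = (\<Prod>i\<in>{2..a}. wt s (f i))"
      by (rule prod.cong) (auto simp: Psi_def)
    finally show ?thesis by (simp add: Psi_def)
  qed
  have "infsum (\<lambda>f. ennreal (\<Prod>i\<in>{1..a}. wt s (Psi a (L1, f) i))) (PiE {2..a} (\<lambda>_. above L1))
      = (\<Sum>f\<in>PiE {2..a} (\<lambda>_. above L1). ennreal (wt s L1 * (\<Prod>i\<in>{2..a}. wt s (f i))))"
    unfolding pr using finP by (simp add: infsum_finite)
  also have "\<dots> = ennreal (\<Sum>f\<in>PiE {2..a} (\<lambda>_. above L1). wt s L1 * (\<Prod>i\<in>{2..a}. wt s (f i)))"
    by (rule sum_ennreal) (simp add: wt0 prod_nonneg)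
  also have "(\<Sum>f\<in>PiE {2..a} (\<lambda>_. above L1). wt s L1 * (\<Prod>i\<in>{2..a}. wt s (f i)))
      = wt s L1 * (\<Prod>i\<in>{2..a}. \<Sum>L\<in>above L1. wt s L)"
  proof -
    have "(\<Prod>i\<in>{2..a}. \<Sum>L\<in>above L1. wt s L) = (\<Sum>f\<in>PiE {2..a} (\<lambda>_. above L1). \<Prod>i\<in>{2..a}. wt s (f i))"
      by (rule prod_sum_PiE[of "{2..a}" "\<lambda>_. above L1" "\<lambda>_. wt s"]) (auto simp: finA)
    then show ?thesis by (simp add: sum_distrib_left)
  qed
  also have "(\<Prod>i\<in>{2..a}. \<Sum>L\<in>above L1. wt s L) = Zs L1 s ^ (a - 1)"
    by (simp add: Zs_def wt_def)
  finally show ?thesis .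
qed

theorem main:
  fixes s :: real
  assumes a: "a \<ge> 1"
  defines "t \<equiv> real q powr (- s)"
  shows "zeta_V2a TYPE('a) a s =
    infsum (\<lambda>r0. ennreal (t ^ (2 * r0)) *
       (ennreal (zeta_lambda pi r0 r0 s) ^ (a - 1) +
        ennreal (1 + 1 / real q) *
          infsum (\<lambda>r1. ennreal ((real q * t) ^ r1) *
                      ennreal (zeta_lambda pi (r0 + r1) r0 s) ^ (a - 1)) {1..}))
      UNIV" (is "_ = ?rhs")
proof -
  define G where "G r0 r1 = ennreal (t ^ (2 * r0 + r1) * zeta_lambda pi (r0 + r1) r0 s ^ (a - 1))" for r0 r1
  have t0: "0 \<le> t" unfolding t_def by simp
  have z0: "0 \<le> zeta_lambda pi l1 l2 s" for l1 l2 unfolding zeta_lambda_def by (rule sum_nonneg) simp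
  have "zeta_V2a TYPE('a) a s = infsum (\<lambda>Lam. ennreal (\<Prod>i\<in>{1..a}. wt s (Lam i))) (finite_index_subreps_V2a a)"
    unfolding zeta_V2a_def wt_def by simp
  also have "\<dots> = infsum (\<lambda>X. ennreal (\<Prod>i\<in>{1..a}. wt s (Psi a X i))) (SIGMA L1:Lat. PiE {2..a} (\<lambda>_. above L1))"
    by (rule infsum_reindex_bij_betw[OF Psi_bij[OF a], symmetric])
  also have "\<dots> = infsum (\<lambda>L1. infsum (\<lambda>f. ennreal (\<Prod>i\<in>{1..a}. wt s (Psi a (L1, f) i))) (PiE {2..a} (\<lambda>_. above L1))) Lat"
    by (rule ennreal_infsum_Sigma)
  also have "\<dots> = infsum (\<lambda>L1. ennreal (wt s L1 * Zs L1 s ^ (a - 1))) Lat"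
    by (rule infsum_cong) (rule inner_sum[OF a])
  also have "\<dots> = infsum (\<lambda>X. ennreal (wt s (Phi X) * Zs (Phi X) s ^ (a - 1))) PP"
    by (rule infsum_reindex_bij_betw[OF Phi_bij, symmetric])
  also have "\<dots> = infsum (\<lambda>X. G (fst X) (fst (snd X))) PP"
  proof (rule infsum_cong)
    fix X assume "X \<in> PP"
    obtain r0 r1 w where X: "X = (r0, r1, w)" by (cases X) auto
    show "ennreal (wt s (Phi X) * Zs (Phi X) s ^ (a - 1)) = G (fst X) (fst (snd X))"
      unfolding X G_def wt_def Phi_index Phi_Zs t_def powr_nat_pow by simp
  qed
  also have "\<dots> = infsum (\<lambda>r0. infsum (\<lambda>Y. G r0 (fst Y)) (SIGMA r1:UNIV. W r1)) UNIV"
    unfolding PP_def by (subst ennreal_infsum_Sigma) simp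
  also have "\<dots> = infsum (\<lambda>r0. infsum (\<lambda>r1. infsum (\<lambda>w. G r0 r1) (W r1)) UNIV) UNIV"
    by (subst ennreal_infsum_Sigma) simp
  also have "\<dots> = infsum (\<lambda>r0. infsum (\<lambda>r1. of_nat (card (W r1)) * G r0 r1) UNIV) UNIV"
    using W_card by (simp add: infsum_finite)
  also have "\<dots> = ?rhs"
  proof (rule infsum_cong)
    fix r0 :: nat
    define Z where "Z r1 = zeta_lambda pi (r0 + r1) r0 s" for r1
    have Z0: "0 \<le> Z r1" for r1 unfolding Z_def by (rule z0)
    have U: "(UNIV :: nat set) = insert 0 {1..}" by auto
    have "infsum (\<lambda>r1. of_nat (card (W r1)) * G r0 r1) UNIV
        = of_nat (card (W 0)) * G r0 0 + infsum (\<lambda>r1. of_nat (card (W r1)) * G r0 r1) {1..}"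
      unfolding U by (rule infsum_insert) (auto intro: nonneg_summable_on_complete)
    also have "of_nat (card (W 0)) * G r0 0 = ennreal (t ^ (2 * r0)) * ennreal (zeta_lambda pi r0 r0 s) ^ (a - 1)"
    proof -
      have "card (W 0) = 1" using W_card[of 0] by simp
      then show ?thesis unfolding G_def
        by (simp add: ennreal_mult t0 z0 ennreal_power)
    qed
    also have "infsum (\<lambda>r1. of_nat (card (W r1)) * G r0 r1) {1..}
        = infsum (\<lambda>r1. ennreal (t ^ (2 * r0)) * (ennreal (1 + 1 / real q) * (ennreal ((real q * t) ^ r1) * ennreal (Z r1) ^ (a - 1)))) {1..}"
    proof (rule infsum_cong)
      fix r1 :: nat assume "r1 \<in> {1..}"
      then obtain n where n: "r1 = Suc n" by (cases r1) auto
      have q0: "real q > 0" using q_ge2 by simp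
      have "real (q ^ r1 + q ^ (r1 - 1)) * (t ^ (2 * r0 + r1) * Z r1 ^ (a - 1))
          = t ^ (2 * r0) * ((1 + 1 / real q) * ((real q * t) ^ r1 * Z r1 ^ (a - 1)))"
        using q0 unfolding n by (simp add: field_simps power_add power_mult_distrib)
      moreover have "card (W r1) = q ^ r1 + q ^ (r1 - 1)" using W_card[of r1] n by simp
      moreover have e1: "ennreal (Z r1) ^ (a - 1) = ennreal (Z r1 ^ (a - 1))" by (rule ennreal_power[OF Z0])
      moreover have e2: "ennreal ((real q * t) ^ r1) * ennreal (Z r1 ^ (a - 1)) = ennreal ((real q * t) ^ r1 * Z r1 ^ (a - 1))"
        by (rule ennreal_mult[symmetric]) (simp_all add: t0 Z0)
      moreover have e3: "ennreal (1 + 1 / real q) * ennreal ((real q * t) ^ r1 * Z r1 ^ (a - 1))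
          = ennreal ((1 + 1 / real q) * ((real q * t) ^ r1 * Z r1 ^ (a - 1)))"
        by (rule ennreal_mult[symmetric]) (simp_all add: t0 Z0)
      moreover have e4: "ennreal (t ^ (2 * r0)) * ennreal ((1 + 1 / real q) * ((real q * t) ^ r1 * Z r1 ^ (a - 1)))
          = ennreal (t ^ (2 * r0) * ((1 + 1 / real q) * ((real q * t) ^ r1 * Z r1 ^ (a - 1))))"
        by (rule ennreal_mult[symmetric]) (simp_all add: t0 Z0)
      moreover have e5: "of_nat (card (W r1)) * G r0 r1 = ennreal (real (card (W r1)) * (t ^ (2 * r0 + r1) * Z r1 ^ (a - 1)))"
        unfolding G_def Z_def ennreal_of_nat_eq_real_of_nat
        by (rule ennreal_mult[symmetric]) (simp_all add: t0 z0)
      ultimately show "of_nat (card (W r1)) * G r0 r1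
          = ennreal (t ^ (2 * r0)) * (ennreal (1 + 1 / real q) * (ennreal ((real q * t) ^ r1) * ennreal (Z r1) ^ (a - 1)))"
        by (simp only:)
    qed
    also have "\<dots> = ennreal (t ^ (2 * r0)) * (ennreal (1 + 1 / real q) * infsum (\<lambda>r1. ennreal ((real q * t) ^ r1) * ennreal (Z r1) ^ (a - 1)) {1..})"
      by (simp add: ennreal_infsum_cmult)
    finally show "infsum (\<lambda>r1. of_nat (card (W r1)) * G r0 r1) UNIV
      = ennreal (t ^ (2 * r0)) *
       (ennreal (zeta_lambda pi r0 r0 s) ^ (a - 1) +
        ennreal (1 + 1 / real q) *
          infsum (\<lambda>r1. ennreal ((real q * t) ^ r1) *
                      ennreal (zeta_lambda pi (r0 + r1) r0 s) ^ (a - 1)) {1..})"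
      by (simp add: Z_def distrib_left)
  qed
  finally show ?thesis .
qed

end

theorem proposition3p6:
  fixes \<pi> :: "'a::idom" and q :: nat and a :: nat and s :: real
  assumes "compact_dvr \<pi> q" and "a \<ge> 1"
  defines "t \<equiv> real q powr (- s)"
  shows "zeta_V2a TYPE('a) a s =
    infsum (\<lambda>r0. ennreal (t ^ (2 * r0)) *
       (ennreal (zeta_lambda \<pi> r0 r0 s) ^ (a - 1) +
        ennreal (1 + 1 / real q) *
          infsum (\<lambda>r1. ennreal ((real q * t) ^ r1) *
                      ennreal (zeta_lambda \<pi> (r0 + r1) r0 s) ^ (a - 1)) {1..}))
      UNIV"
  proof -
  interpret cdvr "\<pi>" q using assms(1) by (rule cdvr.intro)
  show ?thesis unfolding t_def by (rule main[OF assms(2)])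
qed

end
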